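(* Consider the symmetrical BSPR network ($p_{s,i}=p_s$, $p_{i,d}=p_d$ for all $i$, $0\le p_s,p_d<1/2$), let $p=p_s(1-p_d)+(1-p_s)p_d$ and $q=1-p$. For any $\zeta>0$, let $K(p,\zeta)$ be the smallest positive integer $k$ satisfying \[ 1+kp\log p+kq\log q-\sum_{l=0}^{k-1}\binom{k-1}{l}\left(q^lp^{k-l}+q^{k-l}p^l\right)\log\left(q^lp^{k-l}+q^{k-l}p^l\right)\ge 1-\zeta . \] If the number of relays satisfies $K>K(p,\zeta)$, then coded transmission with forwarding relays achieves rates within $\zeta$ bits of the capacity.
   Context: Logarithms are base 2, with $0\log0=0$. BSPR network with $K$ relays: at each network use $t$ the source sends $U[t]\in\{0,1\}$; relay $i$ receives $V_i[t]=U[t]\oplus Z_i[t]$, $\Pr\{Z_i=1\}=p_{s,i}$; relay $i$ sends $X_i[t]$ and the destination receives $Y_i[t]=X_i[t]\oplus E_i[t]$, $\Pr\{E_i=1\}=p_{i,d}$; all noises mutually independent and i.i.d. over time. An $(M,n)$ code: message $W$ uniform on $\{0,\dots,M-1\}$, source encoder on $W$, relay encoders $X_i[t]=f_{i,t}(V_i[1],\dots,V_i[t-1])$, destination decoder on all $Y_i$; rate $(\log_2M)/n$; average error probability $P_e$. $R$ is achievable if for every $\epsilon>0$ and all sufficiently large $n$ there is a $(2^{nR},n)$ code with $P_e\le\epsilon$; the capacity $C$ is the supremum of achievable rates. A forwarding relay sets $X_i[t]=V_i[t-1]$ ($X_i[1]=0$). Coded transmission with forwarding relays: all relays forward and the source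 uses a channel code for the effective point-to-point channel from $U$ to $(Y_1,\dots,Y_K)$, the destination decoding from $(Y_1,\dots,Y_K)$; "achieves rates within $\zeta$ bits of the capacity" means every rate below some $R\ge C-\zeta$ is achievable by this scheme. *)

theory Defs
  imports Complex_Main
begin

definition xlog :: "real \<Rightarrow> real" where
  "xlog x = (if x = 0 then 0 else x * log 2 x)"

text \<open>BSPR network with K relays (0..K-1), time steps 0..n-1 (the paper's 1..n).
  ps i = Pr{Z_i = 1}, pd i = Pr{E_i = 1}.  A noise realization is the set of
  (relay, time) positions where the noise bit is 1.\<close>

definition grid :: "nat \<Rightarrow> nat \<Rightarrow> (nat \<times> nat) set" where
  "grid K n = {..<K} \<times> {..<n}"

definition noise_weight :: "(nat \<Rightarrow> real) \<Rightarrow> nat \<Rightarrow> nat \<Rightarrow> (nat \<times> nat) set \<Rightarrow> real" where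
  "noise_weight p K n S = (\<Prod>(i,t)\<in>grid K n. if (i,t) \<in> S then p i else 1 - p i)"

text \<open>Code components: source encoder enc w t = U[t] for message w;
  relay encoder f i t (V_i[0],...,V_i[t-1]) = X_i[t] (causal by construction);
  decoder dec applied to the received array Y (Y i t for i<K, t<n; False elsewhere).\<close>

definition relay_in :: "(nat \<Rightarrow> nat \<Rightarrow> bool) \<Rightarrow> nat \<Rightarrow> (nat \<times> nat) set \<Rightarrow> nat \<Rightarrow> nat \<Rightarrow> bool" where
  "relay_in enc w Zs i t = (enc w t \<noteq> ((i,t) \<in> Zs))"

definition received ::
  "nat \<Rightarrow> nat \<Rightarrow> (nat \<Rightarrow> nat \<Rightarrow> bool) \<Rightarrow> (nat \<Rightarrow> nat \<Rightarrow> bool list \<Rightarrow> bool)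
   \<Rightarrow> nat \<Rightarrow> (nat \<times> nat) set \<Rightarrow> (nat \<times> nat) set \<Rightarrow> nat \<Rightarrow> nat \<Rightarrow> bool" where
  "received K n enc f w Zs Es i t =
     (if i < K \<and> t < n
      then (f i t (map (relay_in enc w Zs i) [0..<t]) \<noteq> ((i,t) \<in> Es))
      else False)"

definition avg_error ::
  "nat \<Rightarrow> (nat \<Rightarrow> real) \<Rightarrow> (nat \<Rightarrow> real) \<Rightarrow> nat \<Rightarrow> nat \<Rightarrow> (nat \<Rightarrow> nat \<Rightarrow> bool)
   \<Rightarrow> (nat \<Rightarrow> nat \<Rightarrow> bool list \<Rightarrow> bool) \<Rightarrow> ((nat \<Rightarrow> nat \<Rightarrow> bool) \<Rightarrow> nat) \<Rightarrow> real" where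
  "avg_error K ps pd n M enc f dec =
     (1 / real M) * (\<Sum>w<M. \<Sum>Zs\<in>Pow (grid K n). \<Sum>Es\<in>Pow (grid K n).
        noise_weight ps K n Zs * noise_weight pd K n Es *
        (if dec (received K n enc f w Zs Es) \<noteq> w then 1 else 0))"

definition num_msgs :: "nat \<Rightarrow> real \<Rightarrow> nat" where
  "num_msgs n R = nat \<lceil>2 powr (real n * R)\<rceil>"

definition achievable :: "nat \<Rightarrow> (nat \<Rightarrow> real) \<Rightarrow> (nat \<Rightarrow> real) \<Rightarrow> real \<Rightarrow> bool" where
  "achievable K ps pd R \<longleftrightarrow>
     (\<forall>\<epsilon>>0. \<exists>N. \<forall>n\<ge>N. \<exists>enc f dec. avg_error K ps pd n (num_msgs n R) enc f dec \<le> \<epsilon>)"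

definition capacity :: "nat \<Rightarrow> (nat \<Rightarrow> real) \<Rightarrow> (nat \<Rightarrow> real) \<Rightarrow> real" where
  "capacity K ps pd = Sup {R. achievable K ps pd R}"

definition fwd_relays :: "nat \<Rightarrow> nat \<Rightarrow> bool list \<Rightarrow> bool" where
  "fwd_relays i t vs = (if t = 0 then False else last vs)"

definition fwd_achievable :: "nat \<Rightarrow> (nat \<Rightarrow> real) \<Rightarrow> (nat \<Rightarrow> real) \<Rightarrow> real \<Rightarrow> bool" where
  "fwd_achievable K ps pd R \<longleftrightarrow>
     (\<forall>\<epsilon>>0. \<exists>N. \<forall>n\<ge>N. \<exists>enc dec.
        avg_error K ps pd n (num_msgs n R) enc fwd_relays dec \<le> \<epsilon>)"

definition fwd_info :: "real \<Rightarrow> nat \<Rightarrow> real" where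
  "fwd_info p k = (let q = 1 - p in
     1 + real k * xlog p + real k * xlog q
     - (\<Sum>l = 0..k-1. real ((k-1) choose l) *
          xlog (q ^ l * p ^ (k-l) + q ^ (k-l) * p ^ l)))"

definition K_thr :: "real \<Rightarrow> real \<Rightarrow> nat" where
  "K_thr p \<zeta> = (LEAST k. 0 < k \<and> fwd_info p k \<ge> 1 - \<zeta>)"

end

theory Submission
  imports Defs
begin


definition wt :: "real \<Rightarrow> 'a set \<Rightarrow> 'a set \<Rightarrow> real" where
  "wt a A S = (\<Prod>x\<in>A. if x \<in> S then a else 1 - a)"

lemma sum_Pow_Un:
  assumes "finite X" "finite Y" "X \<inter> Y = {}"
  shows "(\<Sum>S\<in>Pow (X \<union> Y). f S) = (\<Sum>S1\<in>Pow X. \<Sum>S2\<in>Pow Y. f (S1 \<union> S2))"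
proof -
  have bij: "bij_betw (\<lambda>(a,b). a \<union> b) (Pow X \<times> Pow Y) (Pow (X \<union> Y))"
    by (rule bij_betw_byWitness[where f' = "\<lambda>S. (S \<inter> X, S \<inter> Y)"]) (use assms(3) in auto)
  have "(\<Sum>S\<in>Pow (X \<union> Y). f S) = (\<Sum>x\<in>Pow X \<times> Pow Y. f (case x of (a,b) \<Rightarrow> a \<union> b))"
    using sum.reindex_bij_betw[OF bij, of f] by simp
  also have "\<dots> = (\<Sum>S1\<in>Pow X. \<Sum>S2\<in>Pow Y. f (S1 \<union> S2))"
    by (subst sum.cartesian_product) (simp add: case_prod_beta)
  finally show ?thesis .
qed

lemma wt_Un:
  assumes "finite X" "finite Y" "X \<inter> Y = {}" "S1 \<subseteq> X" "S2 \<subseteq> Y"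
  shows "wt a (X \<union> Y) (S1 \<union> S2) = wt a X S1 * wt a Y S2"
proof -
  have "wt a (X \<union> Y) (S1 \<union> S2) = (\<Prod>x\<in>X. if x \<in> S1 \<union> S2 then a else 1 - a) * (\<Prod>x\<in>Y. if x \<in> S1 \<union> S2 then a else 1 - a)"
    unfolding wt_def using assms by (simp add: prod.union_disjoint)
  also have "(\<Prod>x\<in>X. if x \<in> S1 \<union> S2 then a else 1 - a) = wt a X S1"
    unfolding wt_def using assms by (intro prod.cong) auto
  also have "(\<Prod>x\<in>Y. if x \<in> S1 \<union> S2 then a else 1 - a) = wt a Y S2"
    unfolding wt_def using assms by (intro prod.cong) auto
  finally show ?thesis .
qed

lemma sum_Pow_bool:
  fixes f :: "'a \<Rightarrow> bool \<Rightarrow> real"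
  assumes "finite A"
  shows "(\<Sum>S\<in>Pow A. \<Prod>t\<in>A. f t (t \<in> S)) = (\<Prod>t\<in>A. f t True + f t False)"
proof -
  have "(\<Prod>t\<in>A. f t True + f t False) = (\<Sum>X\<in>Pow A. (\<Prod>x\<in>X. f x True) * (\<Prod>x\<in>A-X. f x False))"
    by (rule prod_add[OF assms])
  also have "\<dots> = (\<Sum>S\<in>Pow A. \<Prod>t\<in>A. f t (t \<in> S))"
  proof (rule sum.cong[OF refl])
    fix X assume X: "X \<in> Pow A"
    have "(\<Prod>t\<in>A. f t (t \<in> X)) = (\<Prod>t\<in>A. if t \<in> X then f t True else f t False)"
      by (intro prod.cong) auto
    also have "\<dots> = (\<Prod>x\<in>A \<inter> {x. x \<in> X}. f x True) * (\<Prod>x\<in>A \<inter> - {x. x \<in> X}. f x False)"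
      by (rule prod.If_cases[OF assms])
    also have "A \<inter> {x. x \<in> X} = X" using X by auto
    also have "A \<inter> - {x. x \<in> X} = A - X" by auto
    finally show "(\<Prod>x\<in>X. f x True) * (\<Prod>x\<in>A-X. f x False) = (\<Prod>t\<in>A. f t (t \<in> X))" by simp
  qed
  finally show ?thesis by simp
qed

lemma sum_wt: "finite A \<Longrightarrow> (\<Sum>S\<in>Pow A. wt a A S) = 1"
  using sum_Pow_bool[of A "\<lambda>t b. if b then a else 1 - a"] unfolding wt_def by simp

lemma wt_nonneg: "0 \<le> a \<Longrightarrow> a \<le> 1 \<Longrightarrow> 0 \<le> wt a A S"
  unfolding wt_def by (intro prod_nonneg) auto

lemma sum_Pow_single: "(\<Sum>S\<in>Pow {x}. g S) = g {} + g {x}"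
proof -
  have "Pow {x} = {{}, {x}}" by auto
  thus ?thesis by simp
qed

lemma wt_card:
  assumes "finite A" "N \<subseteq> A"
  shows "wt a A N = a ^ card N * (1 - a) ^ (card A - card N)"
proof -
  have "wt a A N = (\<Prod>x\<in>A \<inter> {x. x \<in> N}. a) * (\<Prod>x\<in>A \<inter> - {x. x \<in> N}. 1 - a)"
    unfolding wt_def by (rule prod.If_cases[OF assms(1)])
  also have "A \<inter> {x. x \<in> N} = N" using assms by auto
  also have "A \<inter> - {x. x \<in> N} = A - N" by auto
  finally show ?thesis using assms by (simp add: card_Diff_subset finite_subset)
qed



definition symd :: "'a set \<Rightarrow> 'a set \<Rightarrow> 'a set" where
  "symd S T = (S - T) \<union> (T - S)"

lemma wt_single: "wt a {x} {} = 1 - a" "wt a {x} {x} = a"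
  unfolding wt_def by auto

lemma sum_xor:
  assumes "finite B"
  shows "(\<Sum>S1\<in>Pow B. \<Sum>S2\<in>Pow B. wt a B S1 * wt b B S2 * F (symd S1 S2))
       = (\<Sum>N\<in>Pow B. wt (a*(1-b)+(1-a)*b) B N * F N)"
  using assms
proof (induction B arbitrary: F rule: finite_induct)
  case empty
  then show ?case by (simp add: wt_def symd_def)
next
  case (insert x B)
  define p where "p = a*(1-b)+(1-a)*b"
  define G where "G N = (a*b + (1-a)*(1-b)) * F N + p * F (N \<union> {x})" for N
  have ins: "insert x B = B \<union> {x}" by auto
  have dj: "B \<inter> {x} = {}" using insert by auto
  have fB: "finite B" by fact
  have SU: "(\<Sum>S\<in>Pow (B \<union> {x}). f S) = (\<Sum>S1\<in>Pow B. \<Sum>S2\<in>Pow {x}. f (S1 \<union> S2))" for f :: "'a set \<Rightarrow> real"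
    using sum_Pow_Un[OF fB _ dj] by simp
  have pt: "(\<Sum>e1\<in>Pow {x}. \<Sum>e2\<in>Pow {x}. wt a (B \<union> {x}) (S1 \<union> e1) * wt b (B \<union> {x}) (S2 \<union> e2) * F (symd (S1 \<union> e1) (S2 \<union> e2)))
      = wt a B S1 * wt b B S2 * G (symd S1 S2)" if "S1 \<subseteq> B" "S2 \<subseteq> B" for S1 S2
  proof -
    have w: "wt c (B \<union> {x}) (S \<union> e) = wt c B S * wt c {x} e" if "S \<subseteq> B" "e \<subseteq> {x}" for c S e
      using wt_Un[OF fB _ dj that] by simp
    have xS1: "x \<notin> S1" "x \<notin> S2" using that insert by auto
    have d1: "symd (S1 \<union> {}) (S2 \<union> {}) = symd S1 S2"
      "symd (S1 \<union> {x}) (S2 \<union> {x}) = symd S1 S2"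
      "symd (S1 \<union> {x}) (S2 \<union> {}) = symd S1 S2 \<union> {x}"
      "symd (S1 \<union> {}) (S2 \<union> {x}) = symd S1 S2 \<union> {x}"
      using xS1 unfolding symd_def by auto
    have h: "wt a (B \<union> {x}) (S1 \<union> {}) = wt a B S1 * (1 - a)"
      "wt a (B \<union> {x}) (S1 \<union> {x}) = wt a B S1 * a"
      "wt b (B \<union> {x}) (S2 \<union> {}) = wt b B S2 * (1 - b)"
      "wt b (B \<union> {x}) (S2 \<union> {x}) = wt b B S2 * b"
      using w[of S1 "{}" a] w[of S1 "{x}" a] w[of S2 "{}" b] w[of S2 "{x}" b] that
      by (simp_all add: wt_single)
    show ?thesis
      unfolding sum_Pow_single d1 h
      by (simp add: G_def p_def algebra_simps)
  qed
  have "(\<Sum>S1\<in>Pow (insert x B). \<Sum>S2\<in>Pow (insert x B). wt a (insert x B) S1 * wt b (insert x B) S2 * F (symd S1 S2))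
      = (\<Sum>S1\<in>Pow B. \<Sum>e1\<in>Pow {x}. \<Sum>S2\<in>Pow B. \<Sum>e2\<in>Pow {x}. wt a (B \<union> {x}) (S1 \<union> e1) * wt b (B \<union> {x}) (S2 \<union> e2) * F (symd (S1 \<union> e1) (S2 \<union> e2)))"
    by (simp only: ins SU)
  also have "\<dots> = (\<Sum>S1\<in>Pow B. \<Sum>S2\<in>Pow B. \<Sum>e1\<in>Pow {x}. \<Sum>e2\<in>Pow {x}. wt a (B \<union> {x}) (S1 \<union> e1) * wt b (B \<union> {x}) (S2 \<union> e2) * F (symd (S1 \<union> e1) (S2 \<union> e2)))"
    by (intro sum.cong[OF refl] sum.swap)
  also have "\<dots> = (\<Sum>S1\<in>Pow B. \<Sum>S2\<in>Pow B. wt a B S1 * wt b B S2 * G (symd S1 S2))"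
    by (intro sum.cong[OF refl], rule pt) auto
  also have "\<dots> = (\<Sum>N\<in>Pow B. wt p B N * G N)"
    unfolding p_def by (rule insert.IH)
  also have "\<dots> = (\<Sum>N\<in>Pow B. \<Sum>e\<in>Pow {x}. wt p (B \<union> {x}) (N \<union> e) * F (N \<union> e))"
  proof (intro sum.cong[OF refl])
    fix N assume N: "N \<in> Pow B"
    have w: "wt p (B \<union> {x}) (N \<union> e) = wt p B N * wt p {x} e" if "e \<subseteq> {x}" for e
      using wt_Un[OF fB _ dj _ that] N by simp
    have h: "wt p (B \<union> {x}) (N \<union> {}) = wt p B N * (1 - p)"
      "wt p (B \<union> {x}) (N \<union> {x}) = wt p B N * p"
      using w[of "{}"] w[of "{x}"] by (simp_all add: wt_single)
    show "wt p B N * G N = (\<Sum>e\<in>Pow {x}. wt p (B \<union> {x}) (N \<union> e) * F (N \<union> e))"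
      unfolding sum_Pow_single h by (simp add: G_def p_def algebra_simps)
  qed
  also have "\<dots> = (\<Sum>N\<in>Pow (insert x B). wt p (insert x B) N * F N)"
    by (simp only: ins SU)
  finally show ?case unfolding p_def .
qed

lemma sum_Pow_card:
  assumes "finite A"
  shows "(\<Sum>N\<in>Pow A. g (card N)) = (\<Sum>d\<le>card A. of_nat (card A choose d) * (g d :: real))"
proof -
  have "Pow A = (\<Union>d\<in>{..card A}. {N. N \<subseteq> A \<and> card N = d})"
    using assms by (auto intro: card_mono)
  then have "(\<Sum>N\<in>Pow A. g (card N)) = (\<Sum>d\<le>card A. \<Sum>N\<in>{N. N \<subseteq> A \<and> card N = d}. g (card N))"
    using assms by (simp, subst sum.UNION_disjoint) auto
  also have "\<dots> = (\<Sum>d\<le>card A. of_nat (card A choose d) * g d)"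
    using assms by (intro sum.cong[OF refl]) (simp add: n_subsets)
  finally show ?thesis .
qed

lemma column_sum:
  shows "(\<Sum>S1\<in>Pow {..<k}. \<Sum>S2\<in>Pow {..<k}. wt a {..<k} S1 * wt b {..<k} S2 * H (card (symd S1 S2)))
       = (\<Sum>d\<le>k. of_nat (k choose d) * (a*(1-b)+(1-a)*b) ^ d * (1 - (a*(1-b)+(1-a)*b)) ^ (k - d) * H d)"
proof -
  define p where "p = a*(1-b)+(1-a)*b"
  have "(\<Sum>S1\<in>Pow {..<k}. \<Sum>S2\<in>Pow {..<k}. wt a {..<k} S1 * wt b {..<k} S2 * H (card (symd S1 S2)))
      = (\<Sum>N\<in>Pow {..<k}. wt p {..<k} N * H (card N))"
    unfolding p_def by (rule sum_xor) simp
  also have "\<dots> = (\<Sum>N\<in>Pow {..<k}. p ^ card N * (1 - p) ^ (k - card N) * H (card N))"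
    by (intro sum.cong[OF refl]) (simp add: wt_card)
  also have "\<dots> = (\<Sum>d\<le>k. of_nat (k choose d) * (p ^ d * (1 - p) ^ (k - d) * H d))"
    using sum_Pow_card[of "{..<k}" "\<lambda>d. p ^ d * (1 - p) ^ (k - d) * H d"] by simp
  finally show ?thesis unfolding p_def by (simp add: algebra_simps)
qed



lemma factor2:
  fixes m :: nat
  assumes "finite A1" "finite A2"
    "\<And>t. t < m \<Longrightarrow> X t \<subseteq> A1" "\<And>t. t < m \<Longrightarrow> Y t \<subseteq> A2"
    "\<And>t t'. t < m \<Longrightarrow> t' < m \<Longrightarrow> t \<noteq> t' \<Longrightarrow> X t \<inter> X t' = {}"
    "\<And>t t'. t < m \<Longrightarrow> t' < m \<Longrightarrow> t \<noteq> t' \<Longrightarrow> Y t \<inter> Y t' = {}"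
  shows "(\<Sum>S1\<in>Pow A1. \<Sum>S2\<in>Pow A2. wt a A1 S1 * wt b A2 S2 * (\<Prod>t<m. h t (S1 \<inter> X t) (S2 \<inter> Y t)))
       = (\<Prod>t<m. \<Sum>T1\<in>Pow (X t). \<Sum>T2\<in>Pow (Y t). wt a (X t) T1 * wt b (Y t) T2 * h t T1 T2)"
  using assms
proof (induction m arbitrary: A1 A2)
  case 0
  then show ?case by (simp add: sum_wt sum_distrib_left[symmetric] sum_distrib_right[symmetric])
next
  case (Suc m)
  define B1 where "B1 = A1 - X m"
  define B2 where "B2 = A2 - Y m"
  have XA: "X m \<subseteq> A1" "Y m \<subseteq> A2" using Suc.prems by auto
  have A1: "A1 = B1 \<union> X m" and A2: "A2 = B2 \<union> Y m" using XA unfolding B1_def B2_def by auto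
  have fin: "finite B1" "finite B2" "finite (X m)" "finite (Y m)"
    using Suc.prems(1,2) XA unfolding B1_def B2_def by (auto intro: finite_subset)
  have dj: "B1 \<inter> X m = {}" "B2 \<inter> Y m = {}" unfolding B1_def B2_def by auto
  define f where "f S1 S2 = wt a B1 S1 * wt b B2 S2 * (\<Prod>t<m. h t (S1 \<inter> X t) (S2 \<inter> Y t))" for S1 S2
  define g where "g T1 T2 = wt a (X m) T1 * wt b (Y m) T2 * h m T1 T2" for T1 T2
  have IH: "(\<Sum>S1\<in>Pow B1. \<Sum>S2\<in>Pow B2. f S1 S2)
      = (\<Prod>t<m. \<Sum>T1\<in>Pow (X t). \<Sum>T2\<in>Pow (Y t). wt a (X t) T1 * wt b (Y t) T2 * h t T1 T2)"
    unfolding f_def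
  proof (rule Suc.IH)
    show "finite B1" "finite B2" by (rule fin)+
    fix t assume t: "t < m"
    show "X t \<subseteq> B1" using Suc.prems(3)[of t] Suc.prems(5)[of t m] t unfolding B1_def by auto
    show "Y t \<subseteq> B2" using Suc.prems(4)[of t] Suc.prems(6)[of t m] t unfolding B2_def by auto
  next
    fix t t' assume "t < m" "t' < m" "t \<noteq> t'"
    then show "X t \<inter> X t' = {}" "Y t \<inter> Y t' = {}" using Suc.prems(5,6)[of t t'] by auto
  qed
  have pt: "wt a A1 (S1 \<union> T1) * wt b A2 (S2 \<union> T2) * (\<Prod>t<Suc m. h t ((S1 \<union> T1) \<inter> X t) ((S2 \<union> T2) \<inter> Y t))
      = f S1 S2 * g T1 T2"
    if "S1 \<subseteq> B1" "T1 \<subseteq> X m" "S2 \<subseteq> B2" "T2 \<subseteq> Y m" for S1 S2 T1 T2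
  proof -
    have w: "wt a A1 (S1 \<union> T1) = wt a B1 S1 * wt a (X m) T1"
            "wt b A2 (S2 \<union> T2) = wt b B2 S2 * wt b (Y m) T2"
      unfolding A1 A2 using wt_Un[OF fin(1) fin(3) dj(1) that(1,2)] wt_Un[OF fin(2) fin(4) dj(2) that(3,4)] by auto
    have c: "(S1 \<union> T1) \<inter> X t = S1 \<inter> X t" "(S2 \<union> T2) \<inter> Y t = S2 \<inter> Y t" if "t < m" for t
      using Suc.prems(5,6)[of t m] \<open>t < m\<close> \<open>T1 \<subseteq> X m\<close> \<open>T2 \<subseteq> Y m\<close> by auto
    have cm: "(S1 \<union> T1) \<inter> X m = T1" "(S2 \<union> T2) \<inter> Y m = T2"
      using that dj by auto
    have "(\<Prod>t<Suc m. h t ((S1 \<union> T1) \<inter> X t) ((S2 \<union> T2) \<inter> Y t))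
        = (\<Prod>t<m. h t (S1 \<inter> X t) (S2 \<inter> Y t)) * h m T1 T2"
      by (simp add: c cm)
    then show ?thesis unfolding w f_def g_def by (simp add: algebra_simps)
  qed
  have SU1: "(\<Sum>S\<in>Pow A1. F S) = (\<Sum>S1\<in>Pow B1. \<Sum>T1\<in>Pow (X m). F (S1 \<union> T1))" for F :: "_ \<Rightarrow> real"
    unfolding A1 by (rule sum_Pow_Un) (use fin dj in auto)
  have SU2: "(\<Sum>S\<in>Pow A2. F S) = (\<Sum>S2\<in>Pow B2. \<Sum>T2\<in>Pow (Y m). F (S2 \<union> T2))" for F :: "_ \<Rightarrow> real"
    unfolding A2 by (rule sum_Pow_Un) (use fin dj in auto)
  have "(\<Sum>S1\<in>Pow A1. \<Sum>S2\<in>Pow A2. wt a A1 S1 * wt b A2 S2 * (\<Prod>t<Suc m. h t (S1 \<inter> X t) (S2 \<inter> Y t)))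
      = (\<Sum>S1\<in>Pow B1. \<Sum>T1\<in>Pow (X m). \<Sum>S2\<in>Pow B2. \<Sum>T2\<in>Pow (Y m). f S1 S2 * g T1 T2)"
    unfolding SU1 SU2 by (intro sum.cong[OF refl] pt) auto
  also have "\<dots> = (\<Sum>S1\<in>Pow B1. \<Sum>S2\<in>Pow B2. f S1 S2) * (\<Sum>T1\<in>Pow (X m). \<Sum>T2\<in>Pow (Y m). g T1 T2)"
    by (simp only: sum_product)
  finally show ?case unfolding IH g_def by simp
qed



lemma sum_Pow_image:
  assumes "inj g"
  shows "(\<Sum>T\<in>Pow (g ` A). F T) = (\<Sum>S\<in>Pow A. F (g ` S))"
proof -
  have "Pow (g ` A) = (\<lambda>S. g ` S) ` Pow A" by (auto simp: subset_image_iff)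
  moreover have "inj_on (\<lambda>S. g ` S) (Pow A)"
    using assms by (auto simp: inj_on_def inj_image_eq_iff)
  ultimately show ?thesis by (simp add: sum.reindex)
qed

lemma wt_image: "inj g \<Longrightarrow> wt a (g ` A) (g ` S) = wt a A S"
  unfolding wt_def by (subst prod.reindex) (auto simp: inj_on_def inj_image_mem_iff)

definition Nset :: "nat \<Rightarrow> (nat \<times> nat) set \<Rightarrow> (nat \<times> nat) set \<Rightarrow> nat \<Rightarrow> nat set" where
  "Nset k Zs Es t = {i. i < k \<and> ((i,t) \<in> Zs) \<noteq> ((i, Suc t) \<in> Es)}"

lemma noise_wt: "noise_weight (\<lambda>_. a) K n S = wt a (grid K n) S"
  unfolding noise_weight_def wt_def by (intro prod.cong) auto

lemma column_net:
  "(\<Sum>T1\<in>Pow ((\<lambda>i. (i,t)) ` {..<k}). \<Sum>T2\<in>Pow ((\<lambda>i. (i,Suc t)) ` {..<k}).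
      wt a ((\<lambda>i. (i,t)) ` {..<k}) T1 * wt b ((\<lambda>i. (i,Suc t)) ` {..<k}) T2 * H (card (Nset k T1 T2 t)))
   = (\<Sum>d\<le>k. of_nat (k choose d) * (a*(1-b)+(1-a)*b) ^ d * (1 - (a*(1-b)+(1-a)*b)) ^ (k - d) * H d)"
proof -
  have i1: "inj (\<lambda>i::nat. (i,t))" "inj (\<lambda>i::nat. (i,Suc t))" by (auto simp: inj_on_def)
  have N: "Nset k ((\<lambda>i. (i,t)) ` S1) ((\<lambda>i. (i,Suc t)) ` S2) t = symd S1 S2"
    if "S1 \<subseteq> {..<k}" "S2 \<subseteq> {..<k}" for S1 S2
    using that unfolding Nset_def symd_def by auto
  show ?thesis
    unfolding sum_Pow_image[OF i1(1)] sum_Pow_image[OF i1(2)] wt_image[OF i1(1)] wt_image[OF i1(2)]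
    by (subst column_sum[symmetric]) (intro sum.cong[OF refl], simp add: N)
qed

lemma noise_factor:
  assumes "k \<le> K" "m < n"
  shows "(\<Sum>Zs\<in>Pow (grid K n). \<Sum>Es\<in>Pow (grid K n). wt a (grid K n) Zs * wt b (grid K n) Es *
           (\<Prod>t<m. H (card (Nset k Zs Es t))))
       = (\<Sum>d\<le>k. of_nat (k choose d) * (a*(1-b)+(1-a)*b) ^ d * (1 - (a*(1-b)+(1-a)*b)) ^ (k - d) * H d) ^ m"
proof -
  define X where "X t = (\<lambda>i. (i,t)) ` {..<k}" for t :: nat
  define Y where "Y t = (\<lambda>i. (i,Suc t)) ` {..<k}" for t :: nat
  have NN: "Nset k Zs Es t = Nset k (Zs \<inter> X t) (Es \<inter> Y t) t" for Zs Es t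
    unfolding Nset_def X_def Y_def by auto
  have "(\<Sum>Zs\<in>Pow (grid K n). \<Sum>Es\<in>Pow (grid K n). wt a (grid K n) Zs * wt b (grid K n) Es *
           (\<Prod>t<m. H (card (Nset k Zs Es t))))
      = (\<Sum>Zs\<in>Pow (grid K n). \<Sum>Es\<in>Pow (grid K n). wt a (grid K n) Zs * wt b (grid K n) Es *
           (\<Prod>t<m. (\<lambda>t T1 T2. H (card (Nset k T1 T2 t))) t (Zs \<inter> X t) (Es \<inter> Y t)))"
    by (subst NN) simp
  also have "\<dots> = (\<Prod>t<m. \<Sum>T1\<in>Pow (X t). \<Sum>T2\<in>Pow (Y t). wt a (X t) T1 * wt b (Y t) T2 * H (card (Nset k T1 T2 t)))"
    by (rule factor2) (use assms in \<open>auto simp: grid_def X_def Y_def\<close>)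
  also have "\<dots> = (\<Prod>t<m. (\<Sum>d\<le>k. of_nat (k choose d) * (a*(1-b)+(1-a)*b) ^ d * (1 - (a*(1-b)+(1-a)*b)) ^ (k - d) * H d))"
    unfolding X_def Y_def by (simp only: column_net)
  finally show ?thesis by simp
qed



definition Wt :: "real \<Rightarrow> nat \<Rightarrow> nat \<Rightarrow> real" where "Wt p k d = p ^ d * (1 - p) ^ (k - d)"
definition Ad :: "real \<Rightarrow> nat \<Rightarrow> nat \<Rightarrow> real" where "Ad p k d = Wt p k d + Wt p k (k - d)"
definition rho :: "real \<Rightarrow> nat \<Rightarrow> nat \<Rightarrow> real" where "rho p k d = 2 * Wt p k d / Ad p k d"

lemma sum_atMost_rev: "(\<Sum>d\<le>k. g d) = (\<Sum>d\<le>k. g (k - d :: nat) :: real)"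
  by (rule sum.reindex_bij_witness[where i="\<lambda>d. k - d" and j="\<lambda>d. k - d"]) auto

lemma Wt_nonneg: "0 \<le> p \<Longrightarrow> p \<le> 1 \<Longrightarrow> 0 \<le> Wt p k d"
  unfolding Wt_def by simp

lemma Ad_sym: "d \<le> k \<Longrightarrow> Ad p k (k - d) = Ad p k d"
  unfolding Ad_def by simp

lemma sum_W: "(\<Sum>d\<le>k. of_nat (k choose d) * Wt p k d) = 1"
  using binomial_ring[of p "1 - p" k] unfolding Wt_def by (simp add: mult.assoc)

lemma Wt_pos: "0 < p \<Longrightarrow> p < 1 \<Longrightarrow> 0 < Wt p k d"
  unfolding Wt_def by simp

lemma W_rho_sum:
  assumes "0 \<le> p" "p \<le> 1" "d \<le> k"
  shows "Wt p k d * (rho p k d + rho p k (k - d)) = 2 * Wt p k d"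
proof (cases "Ad p k d = 0")
  case True
  then have "Wt p k d = 0" using Wt_nonneg[OF assms(1,2)] unfolding Ad_def
    by (metis add_nonneg_eq_0_iff)
  then show ?thesis by simp
next
  case False
  have "rho p k d + rho p k (k - d) = 2 * (Wt p k d + Wt p k (k - d)) / Ad p k d"
    unfolding rho_def using Ad_sym[OF assms(3)] by (simp add: add_divide_distrib)
  also have "\<dots> = 2" using False unfolding Ad_def by (simp add: divide_simps)
  finally show ?thesis by simp
qed

lemma sum_W_rho:
  assumes "0 \<le> p" "p \<le> 1"
  shows "(\<Sum>d\<le>k. of_nat (k choose d) * Wt p k d * (rho p k d + rho p k (k - d))) = 2"
proof -
  have "(\<Sum>d\<le>k. of_nat (k choose d) * Wt p k d * (rho p k d + rho p k (k - d)))
       = (\<Sum>d\<le>k. 2 * (of_nat (k choose d) * Wt p k d))"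
    by (intro sum.cong[OF refl]) (use W_rho_sum[OF assms] in \<open>auto simp: mult.assoc\<close>)
  also have "\<dots> = 2" by (simp add: sum_distrib_left[symmetric] sum_W)
  finally show ?thesis .
qed

lemma binom_mean:
  "(\<Sum>d\<le>k. of_nat (k choose d) * Wt p k d * real d) = real k * p"
proof (cases k)
  case 0 then show ?thesis by simp
next
  case (Suc j)
  have "(\<Sum>d\<le>Suc j. of_nat (Suc j choose d) * Wt p (Suc j) d * real d)
      = (\<Sum>d\<le>j. of_nat (Suc j choose Suc d) * Wt p (Suc j) (Suc d) * real (Suc d))"
    by (subst sum.atMost_Suc_shift) simp
  also have "\<dots> = (\<Sum>d\<le>j. real (Suc j) * p * (of_nat (j choose d) * Wt p j d))"
  proof (intro sum.cong[OF refl])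
    fix d assume "d \<in> {..j}"
    obtain c where c: "real (Suc j choose Suc d) = c" by simp
    have e: "c * real (Suc d) = real (Suc j) * real (j choose d)"
      using Suc_times_binomial[of d j] c by (metis mult.commute of_nat_mult)
    have "of_nat (Suc j choose Suc d) * Wt p (Suc j) (Suc d) * real (Suc d) = (c * real (Suc d)) * (p * (p^d*(1-p)^(j-d)))"
      unfolding c Wt_def by (simp add: mult_ac)
    also have "\<dots> = real (Suc j) * real (j choose d) * (p * (p^d*(1-p)^(j-d)))" by (simp only: e)
    also have "\<dots> = real (Suc j) * p * (of_nat (j choose d) * Wt p j d)" by (simp add: Wt_def mult_ac)
    finally show "of_nat (Suc j choose Suc d) * Wt p (Suc j) (Suc d) * real (Suc d) = real (Suc j) * p * (of_nat (j choose d) * Wt p j d)" .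
  qed
  also have "\<dots> = real (Suc j) * p" by (simp add: sum_distrib_left[symmetric] sum_W)
  finally show ?thesis using Suc by simp
qed

lemma binom_mean2:
  "(\<Sum>d\<le>k. of_nat (k choose d) * Wt p k d * real (k - d)) = real k * (1 - p)"
proof -
  have "(\<Sum>d\<le>k. of_nat (k choose d) * Wt p k d * real (k - d))
      = (\<Sum>d\<le>k. of_nat (k choose d) * Wt p k d * (real k - real d))"
    by (intro sum.cong[OF refl]) (simp add: of_nat_diff)
  also have "\<dots> = (\<Sum>d\<le>k. of_nat (k choose d) * Wt p k d) * real k - (\<Sum>d\<le>k. of_nat (k choose d) * Wt p k d * real d)"
    by (simp only: right_diff_distrib sum_subtractf sum_distrib_right)
  also have "\<dots> = real k * (1 - p)" by (simp only: sum_W binom_mean) (simp add: algebra_simps)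
  finally show ?thesis .
qed

lemma sum_sym_pascal:
  assumes "1 \<le> k" "\<And>d. d \<le> k \<Longrightarrow> f (k - d) = f d"
  shows "(\<Sum>d\<le>k. of_nat (k choose d) * f d) = 2 * (\<Sum>l\<le>k-1. of_nat ((k-1) choose l) * (f l :: real))"
proof -
  obtain j where k: "k = Suc j" using assms(1) by (cases k) auto
  have "(\<Sum>d\<le>Suc j. of_nat (Suc j choose d) * f d)
      = f 0 + (\<Sum>d\<le>j. of_nat (Suc j choose Suc d) * f (Suc d))"
    by (subst sum.atMost_Suc_shift) simp
  also have "\<dots> = (\<Sum>d\<le>j. of_nat (j choose d) * f (Suc d)) + (f 0 + (\<Sum>d\<le>j. of_nat (j choose Suc d) * f (Suc d)))"
    by (simp add: sum.distrib algebra_simps)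
  also have "f 0 + (\<Sum>d\<le>j. of_nat (j choose Suc d) * f (Suc d)) = (\<Sum>d\<le>Suc j. of_nat (j choose d) * f d)"
    by (subst sum.atMost_Suc_shift) simp
  also have "\<dots> = (\<Sum>d\<le>j. of_nat (j choose d) * f d)" by simp
  also have "(\<Sum>d\<le>j. of_nat (j choose d) * f (Suc d)) = (\<Sum>d\<le>j. of_nat (j choose (j - d)) * f (Suc (j - d)))"
    by (rule sum_atMost_rev)
  also have "\<dots> = (\<Sum>d\<le>j. of_nat (j choose d) * f d)"
  proof (intro sum.cong[OF refl])
    fix d assume d: "d \<in> {..j}"
    have "f (Suc (j - d)) = f (k - d)" using d k by (simp add: Suc_diff_le)
    also have "\<dots> = f d" using assms(2)[of d] d k by simp
    finally show "of_nat (j choose (j - d)) * f (Suc (j - d)) = of_nat (j choose d) * f d"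
      using d binomial_symmetric[of d j] by simp
  qed
  finally show ?thesis using k by simp
qed



definition Info :: "real \<Rightarrow> nat \<Rightarrow> real" where
  "Info p k = (\<Sum>d\<le>k. of_nat (k choose d) * Wt p k d * log 2 (rho p k d))"

lemma xlog_eq: "0 \<le> x \<Longrightarrow> xlog x = x * log 2 x"
  unfolding xlog_def by simp

lemma Ad_ge: "0 \<le> p \<Longrightarrow> p \<le> 1 \<Longrightarrow> Wt p k d \<le> Ad p k d"
  unfolding Ad_def using Wt_nonneg[of p k "k-d"] by simp

lemma term_split:
  assumes "0 \<le> p" "p \<le> 1"
  shows "Wt p k d * log 2 (rho p k d) = Wt p k d + xlog (Wt p k d) - Wt p k d * log 2 (Ad p k d)"
proof (cases "Wt p k d = 0")
  case True then show ?thesis by (simp add: xlog_def)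
next
  case False
  then have W: "0 < Wt p k d" using Wt_nonneg[OF assms] by (simp add: order_less_le)
  then have A: "0 < Ad p k d" using Ad_ge[OF assms, of k d] by simp
  have "log 2 (rho p k d) = log 2 2 + log 2 (Wt p k d) - log 2 (Ad p k d)"
    unfolding rho_def using W A by (simp add: log_divide log_mult)
  then have "Wt p k d * log 2 (rho p k d) = Wt p k d * (1 + log 2 (Wt p k d) - log 2 (Ad p k d))" by simp
  then show ?thesis using W by (simp add: xlog_def right_diff_distrib distrib_left)
qed

lemma sum_xlogW:
  assumes "0 \<le> p" "p < 1"
  shows "(\<Sum>d\<le>k. of_nat (k choose d) * xlog (Wt p k d)) = real k * xlog p + real k * xlog (1 - p)"
proof (cases "p = 0")
  case True
  have "xlog (Wt p k d) = 0" for d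
    using True unfolding Wt_def xlog_def by (cases d) auto
  then show ?thesis using True by (simp add: xlog_def)
next
  case False
  then have p: "0 < p" "0 < 1 - p" using assms by auto
  have "(\<Sum>d\<le>k. of_nat (k choose d) * xlog (Wt p k d))
      = (\<Sum>d\<le>k. (of_nat (k choose d) * Wt p k d * real d) * log 2 p + (of_nat (k choose d) * Wt p k d * real (k - d)) * log 2 (1 - p))"
  proof (intro sum.cong[OF refl])
    fix d
    have "xlog (Wt p k d) = Wt p k d * (real d * log 2 p + real (k - d) * log 2 (1 - p))"
      using p Wt_pos[of p k d] unfolding xlog_def
      by (simp add: Wt_def log_mult log_nat_power)
    then show "of_nat (k choose d) * xlog (Wt p k d) = (of_nat (k choose d) * Wt p k d * real d) * log 2 p + (of_nat (k choose d) * Wt p k d * real (k - d)) * log 2 (1 - p)"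
      by (simp add: algebra_simps)
  qed
  also have "\<dots> = (real k * p) * log 2 p + (real k * (1 - p)) * log 2 (1 - p)"
    by (simp only: sum.distrib sum_distrib_right[symmetric] binom_mean binom_mean2)
  finally show ?thesis using p by (simp add: xlog_def)
qed

lemma sum_WlogA:
  assumes "0 \<le> p" "p \<le> 1" "1 \<le> k"
  shows "(\<Sum>d\<le>k. of_nat (k choose d) * (Wt p k d * log 2 (Ad p k d)))
       = (\<Sum>l\<le>k-1. of_nat ((k-1) choose l) * xlog (Ad p k l))"
proof -
  define S where "S = (\<Sum>d\<le>k. of_nat (k choose d) * (Wt p k d * log 2 (Ad p k d)))"
  have "S = (\<Sum>d\<le>k. of_nat (k choose (k - d)) * (Wt p k (k - d) * log 2 (Ad p k (k - d))))"
    unfolding S_def by (rule sum_atMost_rev)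
  also have "\<dots> = (\<Sum>d\<le>k. of_nat (k choose d) * (Wt p k (k - d) * log 2 (Ad p k d)))"
    by (intro sum.cong[OF refl]) (simp add: Ad_sym binomial_symmetric[symmetric])
  finally have S2: "S = \<dots>" .
  have "2 * S = (\<Sum>d\<le>k. of_nat (k choose d) * xlog (Ad p k d))"
  proof -
    have "2 * S = S + S" by simp
    also have "\<dots> = (\<Sum>d\<le>k. of_nat (k choose d) * ((Wt p k d + Wt p k (k - d)) * log 2 (Ad p k d)))"
      by (subst (2) S2, unfold S_def) (simp add: sum.distrib[symmetric] algebra_simps)
    also have "\<dots> = (\<Sum>d\<le>k. of_nat (k choose d) * xlog (Ad p k d))"
      by (intro sum.cong[OF refl]) (simp add: xlog_def Ad_def)
    finally show ?thesis .
  qed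
  also have "\<dots> = 2 * (\<Sum>l\<le>k-1. of_nat ((k-1) choose l) * xlog (Ad p k l))"
    by (rule sum_sym_pascal[OF assms(3)]) (simp add: Ad_sym)
  finally show ?thesis unfolding S_def by simp
qed

lemma Info_eq:
  assumes "0 \<le> p" "p < 1" "1 \<le> k"
  shows "Info p k = fwd_info p k"
proof -
  have pl: "p \<le> 1" using assms by simp
  have "Info p k = (\<Sum>d\<le>k. of_nat (k choose d) * Wt p k d + of_nat (k choose d) * xlog (Wt p k d) - of_nat (k choose d) * (Wt p k d * log 2 (Ad p k d)))"
    unfolding Info_def by (intro sum.cong[OF refl]) (simp add: mult.assoc term_split[OF assms(1) pl] algebra_simps)
  also have "\<dots> = 1 + (real k * xlog p + real k * xlog (1 - p)) - (\<Sum>l\<le>k-1. of_nat ((k-1) choose l) * xlog (Ad p k l))"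
    by (simp only: sum_subtractf sum.distrib sum_W sum_xlogW[OF assms(1,2)] sum_WlogA[OF assms(1) pl assms(3)])
  also have "(\<Sum>l\<le>k-1. of_nat ((k-1) choose l) * xlog (Ad p k l))
      = (\<Sum>l = 0..k-1. real ((k-1) choose l) * xlog ((1-p) ^ l * p ^ (k-l) + (1-p) ^ (k-l) * p ^ l))"
    unfolding atMost_atLeast0
  proof (intro sum.cong[OF refl])
    fix l assume "l \<in> {0..k-1}"
    then have "k - (k - l) = l" using assms by auto
    then show "of_nat ((k-1) choose l) * xlog (Ad p k l) = real ((k-1) choose l) * xlog ((1-p) ^ l * p ^ (k-l) + (1-p) ^ (k-l) * p ^ l)"
      unfolding Ad_def Wt_def by (simp add: algebra_simps)
  qed
  finally show ?thesis unfolding fwd_info_def Let_def by simp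
qed



lemma ln1p_sqrt: "0 \<le> x \<Longrightarrow> ln (1 + x) \<le> 2 * sqrt x"
proof -
  assume x: "0 \<le> x"
  have "1 + x \<le> (1 + sqrt x)^2" using x by (simp add: power2_eq_square algebra_simps)
  then have "ln (1 + x) \<le> ln ((1 + sqrt x)^2)" using x by (subst ln_le_cancel_iff) auto
  also have "\<dots> = 2 * ln (1 + sqrt x)" by (simp add: ln_realpow)
  also have "\<dots> \<le> 2 * sqrt x" using ln_add_one_self_le_self[of "sqrt x"] x by simp
  finally show ?thesis .
qed

lemma term_bound:
  assumes "0 \<le> p" "p \<le> 1" "d \<le> k"
  shows "Wt p k d * (1 - log 2 (rho p k d)) \<le> 2 * sqrt (p * (1 - p)) ^ k / ln 2"
proof (cases "Wt p k d = 0")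
  case True then show ?thesis using assms by simp
next
  case False
  define W where "W = Wt p k d"
  define W' where "W' = Wt p k (k - d)"
  have W: "0 < W" using False Wt_nonneg[OF assms(1,2)] unfolding W_def by (simp add: order_less_le)
  have W': "0 \<le> W'" using Wt_nonneg[OF assms(1,2)] unfolding W'_def by simp
  have "1 - log 2 (rho p k d) = log 2 ((W + W') / W)"
    unfolding rho_def Ad_def W_def[symmetric] W'_def[symmetric] using W W'
    by (simp add: log_divide log_mult)
  also have "(W + W') / W = 1 + W' / W" using W by (simp add: field_simps)
  also have "log 2 (1 + W' / W) = ln (1 + W' / W) / ln 2" by (simp add: log_def)
  also have "\<dots> \<le> 2 * sqrt (W' / W) / ln 2"
    by (rule divide_right_mono) (use ln1p_sqrt[of "W'/W"] W W' in auto)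
  finally have le: "1 - log 2 (rho p k d) \<le> 2 * sqrt (W' / W) / ln 2" .
  have "W * (1 - log 2 (rho p k d)) \<le> W * (2 * sqrt (W' / W) / ln 2)"
    using mult_left_mono[OF le] W by simp
  also have "W * (2 * sqrt (W' / W) / ln 2) = 2 * sqrt (W * W') / ln 2"
  proof -
    have "W * sqrt (W' / W) = sqrt (W * W')"
      using W W' by (simp add: real_sqrt_divide real_sqrt_mult field_simps)
    then show ?thesis by (simp add: field_simps)
  qed
  also have "W * W' = (p * (1 - p)) ^ k"
  proof -
    have e: "k - (k - d) = d" "d + (k - d) = k" using assms(3) by auto
    have "W * W' = (p ^ d * p ^ (k - d)) * ((1 - p) ^ (k - d) * (1 - p) ^ d)"
      unfolding W_def W'_def Wt_def e by (simp only: mult_ac)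
    also have "\<dots> = p ^ k * (1 - p) ^ k"
      by (simp only: power_add[symmetric] e add.commute[of "k - d" d])
    finally show ?thesis by (simp add: power_mult_distrib)
  qed
  finally show ?thesis unfolding W_def by (simp add: real_sqrt_power)
qed

lemma Info_bound:
  assumes "0 \<le> p" "p \<le> 1"
  shows "1 - Info p k \<le> 2 * (2 * sqrt (p * (1 - p))) ^ k / ln 2"
proof -
  have "1 - Info p k = (\<Sum>d\<le>k. of_nat (k choose d) * (Wt p k d * (1 - log 2 (rho p k d))))"
    unfolding Info_def using sum_W[of k p]
    by (simp add: right_diff_distrib sum_subtractf mult.assoc)
  also have "\<dots> \<le> (\<Sum>d\<le>k. of_nat (k choose d) * (2 * sqrt (p * (1 - p)) ^ k / ln 2))"
    by (intro sum_mono mult_left_mono term_bound assms) auto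
  also have "\<dots> = 2 ^ k * (2 * sqrt (p * (1 - p)) ^ k / ln 2)"
  proof -
    have "(\<Sum>d\<le>k. of_nat (k choose d) :: real) = 2^k"
      by (simp only: of_nat_sum[symmetric] choose_row_sum) simp
    then show ?thesis by (simp only: sum_distrib_right[symmetric])
  qed
  also have "\<dots> = 2 * (2 * sqrt (p * (1 - p))) ^ k / ln 2" by (simp add: power_mult_distrib)
  finally show ?thesis .
qed

lemma exists_k:
  assumes "0 \<le> p" "p < 1/2" "\<zeta> > 0"
  shows "\<exists>k. 0 < k \<and> fwd_info p k \<ge> 1 - \<zeta>"
proof -
  define r where "r = 2 * sqrt (p * (1 - p))"
  have r0: "0 \<le> r" using assms unfolding r_def by simp
  have "0 < (1 - 2*p)^2" using assms by simp
  then have "p * (1 - p) < 1/4" by (simp add: power2_eq_square algebra_simps)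
  then have "sqrt (p * (1 - p)) < sqrt (1/4)" by (simp only: real_sqrt_less_iff)
  also have "sqrt (1/4::real) = 1/2" by (simp add: real_sqrt_divide)
  finally have r1: "r < 1" unfolding r_def by simp
  have "(\<lambda>k. r ^ k) \<longlonglongrightarrow> 0" by (rule LIMSEQ_power_zero) (use r0 r1 in auto)
  moreover have "0 < \<zeta> * ln 2 / 2" using assms by simp
  ultimately have "eventually (\<lambda>k. r ^ k < \<zeta> * ln 2 / 2) sequentially"
    by (rule order_tendstoD)
  then obtain N where N: "\<And>k. k \<ge> N \<Longrightarrow> r ^ k < \<zeta> * ln 2 / 2" by (auto simp: eventually_sequentially)
  define k where "k = Suc N"
  have "1 - Info p k \<le> 2 * r ^ k / ln 2" unfolding r_def by (rule Info_bound) (use assms in auto)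
  also have "\<dots> \<le> \<zeta>" using N[of k] unfolding k_def by (simp add: field_simps)
  finally have "1 - \<zeta> \<le> Info p k" by simp
  also have "Info p k = fwd_info p k" by (rule Info_eq) (use assms in \<open>auto simp: k_def\<close>)
  finally show ?thesis unfolding k_def by auto
qed



definition psi :: "real \<Rightarrow> nat \<Rightarrow> real \<Rightarrow> real \<Rightarrow> real" where
  "psi p k \<gamma> s = (\<Sum>d\<le>k. of_nat (k choose d) * Wt p k d * (2 powr (\<gamma> * s) * rho p k d powr (- s)))"

lemma rho_pos: "0 \<le> p \<Longrightarrow> p \<le> 1 \<Longrightarrow> Wt p k d \<noteq> 0 \<Longrightarrow> 0 < rho p k d"
  using Wt_nonneg[of p k d] Ad_ge[of p k d] unfolding rho_def
  by (simp add: order_less_le)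

lemma psi_lt1:
  assumes "0 \<le> p" "p \<le> 1" "\<gamma> < Info p k"
  shows "\<exists>s>0. psi p k \<gamma> s < 1"
proof -
  define c where "c d = of_nat (k choose d) * Wt p k d" for d
  define b where "b d = \<gamma> * ln 2 - ln (rho p k d)" for d
  define f where "f s = (\<Sum>d\<le>k. c d * exp (s * b d))" for s
  have pf: "psi p k \<gamma> s = f s" for s
    unfolding psi_def f_def
  proof (intro sum.cong[OF refl])
    fix d
    show "of_nat (k choose d) * Wt p k d * (2 powr (\<gamma> * s) * rho p k d powr - s) = c d * exp (s * b d)"
    proof (cases "Wt p k d = 0")
      case True then show ?thesis by (simp add: c_def)
    next
      case False
      then have r: "0 < rho p k d" by (rule rho_pos[OF assms(1,2)])
      have "2 powr (\<gamma> * s) * rho p k d powr - s = exp (s * b d)"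
        using r by (simp add: powr_def b_def exp_add[symmetric] algebra_simps)
      then show ?thesis by (simp add: c_def)
    qed
  qed
  have D: "(f has_real_derivative (\<Sum>d\<le>k. c d * b d)) (at 0)"
    unfolding f_def by (auto intro!: derivative_eq_intros simp: mult.commute)
  have cb: "c d * b d = ln 2 * (\<gamma> * c d - c d * log 2 (rho p k d))" for d
    unfolding b_def by (simp add: log_def algebra_simps)
  have "(\<Sum>d\<le>k. c d * b d) = ln 2 * (\<gamma> * (\<Sum>d\<le>k. c d) - (\<Sum>d\<le>k. c d * log 2 (rho p k d)))"
    by (simp only: cb sum_distrib_left[symmetric] sum_subtractf)
  also have "(\<Sum>d\<le>k. c d) = 1" unfolding c_def by (rule sum_W)
  also have "(\<Sum>d\<le>k. c d * log 2 (rho p k d)) = Info p k" unfolding c_def Info_def ..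
  finally have neg: "(\<Sum>d\<le>k. c d * b d) < 0" using assms(3) by (simp add: mult_pos_neg)
  obtain e where e: "e > 0" "\<And>h. h > 0 \<Longrightarrow> h < e \<Longrightarrow> f 0 > f (0 + h)"
    using DERIV_neg_dec_right[OF D neg] by blast
  have f0: "f 0 = 1" unfolding f_def c_def by (simp add: sum_W)
  have "f (e/2) < 1" using e(2)[of "e/2"] e(1) f0 by simp
  then show ?thesis using e(1) pf by (intro exI[of _ "e/2"]) auto
qed



lemma received_dep:
  assumes "\<And>t. t < n \<Longrightarrow> enc w t = enc w' t"
  shows "received K n enc f w Zs Es = received K n enc f w' Zs Es"
proof (intro ext)
  fix i t
  show "received K n enc f w Zs Es i t = received K n enc f w' Zs Es i t"
  proof (cases "i < K \<and> t < n")
    case True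
    have mm: "map (relay_in enc w Zs i) [0..<t] = map (relay_in enc w' Zs i) [0..<t]"
      by (rule map_cong[OF refl]) (use True assms in \<open>auto simp: relay_in_def\<close>)
    show ?thesis unfolding received_def by (subst mm) (rule refl)
  next
    case False then show ?thesis unfolding received_def by auto
  qed
qed

lemma correct_card:
  "card {w\<in>{..<M}. dec (received K n enc f w Zs Es) = w} \<le> 2 ^ n"
proof -
  define S where "S = {w\<in>{..<M}. dec (received K n enc f w Zs Es) = w}"
  define g where "g w = {t. t < n \<and> enc w t}" for w
  have "inj_on g S"
  proof (rule inj_onI)
    fix w w' assume w: "w \<in> S" "w' \<in> S" "g w = g w'"
    have "enc w t = enc w' t" if "t < n" for t
      using w(3) that unfolding g_def by (auto simp: set_eq_iff)
    then have "received K n enc f w Zs Es = received K n enc f w' Zs Es"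
      by (rule received_dep)
    then show "w = w'" using w(1,2) unfolding S_def by auto
  qed
  moreover have "g ` S \<subseteq> Pow {..<n}" unfolding g_def by auto
  ultimately have "card S \<le> card (Pow {..<n :: nat})"
    by (intro card_inj_on_le) auto
  then show ?thesis unfolding S_def by (simp add: card_Pow)
qed

lemma sum_wt2: "finite A \<Longrightarrow> (\<Sum>Zs\<in>Pow A. \<Sum>Es\<in>Pow A. wt a A Zs * wt b A Es) = 1"
  by (simp add: sum_distrib_left[symmetric] sum_distrib_right[symmetric] sum_wt)

lemma error_lower:
  assumes "0 \<le> ps" "ps \<le> 1" "0 \<le> pd" "pd \<le> 1" "M > 0"
  shows "avg_error K (\<lambda>_. ps) (\<lambda>_. pd) n M enc f dec \<ge> 1 - 2 ^ n / real M"
proof -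
  define G where "G = grid K n"
  have fG: "finite G" unfolding G_def grid_def by simp
  have ind: "(\<Sum>w<M. (if dec (received K n enc f w Zs Es) \<noteq> w then 1 else 0 :: real)) \<ge> real M - 2 ^ n" for Zs Es
  proof -
    have "(\<Sum>w<M. (if dec (received K n enc f w Zs Es) \<noteq> w then 1 else 0 :: real))
        = (\<Sum>w<M. 1 - (if dec (received K n enc f w Zs Es) = w then 1 else 0 :: real))"
      by (intro sum.cong) auto
    also have "\<dots> = real M - (\<Sum>w<M. (if dec (received K n enc f w Zs Es) = w then 1 else 0 :: real))"
      by (simp add: sum_subtractf)
    moreover have "(\<Sum>w<M. (if dec (received K n enc f w Zs Es) = w then 1 else 0 :: real))
        = real (card {w\<in>{..<M}. dec (received K n enc f w Zs Es) = w})"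
      by (simp add: sum.If_cases Int_def)
    moreover have "real (card {w\<in>{..<M}. dec (received K n enc f w Zs Es) = w}) \<le> real ((2::nat) ^ n)"
      using correct_card[of M dec K n enc f Zs Es] by (simp only: of_nat_le_iff)
    ultimately show ?thesis by simp
  qed
  have "avg_error K (\<lambda>_. ps) (\<lambda>_. pd) n M enc f dec
      = (1 / real M) * (\<Sum>Zs\<in>Pow G. \<Sum>Es\<in>Pow G. wt ps G Zs * wt pd G Es *
           (\<Sum>w<M. (if dec (received K n enc f w Zs Es) \<noteq> w then 1 else 0)))"
  proof -
    have "(\<Sum>w<M. \<Sum>Zs\<in>Pow G. \<Sum>Es\<in>Pow G. wt ps G Zs * wt pd G Es * (if dec (received K n enc f w Zs Es) \<noteq> w then 1 else 0 :: real))
        = (\<Sum>Zs\<in>Pow G. \<Sum>w<M. \<Sum>Es\<in>Pow G. wt ps G Zs * wt pd G Es * (if dec (received K n enc f w Zs Es) \<noteq> w then 1 else 0 :: real))"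
      by (rule sum.swap)
    also have "\<dots> = (\<Sum>Zs\<in>Pow G. \<Sum>Es\<in>Pow G. \<Sum>w<M. wt ps G Zs * wt pd G Es * (if dec (received K n enc f w Zs Es) \<noteq> w then 1 else 0 :: real))"
      by (intro sum.cong[OF refl] sum.swap)
    also have "\<dots> = (\<Sum>Zs\<in>Pow G. \<Sum>Es\<in>Pow G. wt ps G Zs * wt pd G Es * (\<Sum>w<M. (if dec (received K n enc f w Zs Es) \<noteq> w then 1 else 0 :: real)))"
      by (simp only: sum_distrib_left)
    finally show ?thesis unfolding avg_error_def noise_wt G_def by simp
  qed
  also have "\<dots> \<ge> (1 / real M) * (\<Sum>Zs\<in>Pow G. \<Sum>Es\<in>Pow G. wt ps G Zs * wt pd G Es * (real M - 2 ^ n))"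
  proof -
    have "(\<Sum>Zs\<in>Pow G. \<Sum>Es\<in>Pow G. wt ps G Zs * wt pd G Es * (real M - 2 ^ n))
       \<le> (\<Sum>Zs\<in>Pow G. \<Sum>Es\<in>Pow G. wt ps G Zs * wt pd G Es * (\<Sum>w<M. (if dec (received K n enc f w Zs Es) \<noteq> w then 1 else 0)))"
      by (intro sum_mono, rule mult_left_mono[OF ind]) (simp add: wt_nonneg assms)
    then show ?thesis by (rule mult_left_mono) simp
  qed
  moreover have "(\<Sum>Zs\<in>Pow G. \<Sum>Es\<in>Pow G. wt ps G Zs * wt pd G Es * (real M - 2 ^ n)) = real M - 2 ^ n"
    using sum_wt2[OF fG, of ps pd] by (simp add: sum_distrib_right[symmetric])
  ultimately show ?thesis using assms(5) by (simp add: field_simps)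
qed

lemma achievable_le1:
  assumes "0 \<le> ps" "ps \<le> 1" "0 \<le> pd" "pd \<le> 1" "achievable K (\<lambda>_. ps) (\<lambda>_. pd) R"
  shows "R \<le> 1"
proof (rule ccontr)
  assume "\<not> R \<le> 1"
  then have R: "R > 1" by simp
  obtain N where N: "\<And>n. n \<ge> N \<Longrightarrow> \<exists>enc f dec. avg_error K (\<lambda>_. ps) (\<lambda>_. pd) n (num_msgs n R) enc f dec \<le> 1/2"
  proof -
    have "\<forall>\<epsilon>>0. \<exists>N. \<forall>n\<ge>N. \<exists>enc f dec. avg_error K (\<lambda>_. ps) (\<lambda>_. pd) n (num_msgs n R) enc f dec \<le> \<epsilon>"
      using assms(5) unfolding achievable_def .
    then have "\<exists>N. \<forall>n\<ge>N. \<exists>enc f dec. avg_error K (\<lambda>_. ps) (\<lambda>_. pd) n (num_msgs n R) enc f dec \<le> 1/2"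
      by (rule allE[of _ "1/2"]) simp
    then show ?thesis using that by blast
  qed
  obtain n :: nat where n: "n \<ge> N" "real n > 1 / (R - 1)"
  proof -
    obtain m :: nat where m: "1 / (R - 1) < real m" using reals_Archimedean2 by blast
    show ?thesis by (rule that[of "max N m"]) (use m in auto)
  qed
  obtain enc f dec where e: "avg_error K (\<lambda>_. ps) (\<lambda>_. pd) n (num_msgs n R) enc f dec \<le> 1/2"
    using N[OF n(1)] by blast
  define M where "M = num_msgs n R"
  have Mge: "real M \<ge> 2 powr (real n * R)" unfolding M_def num_msgs_def by simp
  then have "real M > 0" using powr_gt_zero[of 2 "real n * R"] by linarith
  then have M0: "M > 0" by simp
  have "1 - 2 ^ n / real M \<le> 1/2" using error_lower[OF assms(1-4) M0, where K=K and n=n and enc=enc and f=f and dec=dec] e unfolding M_def by linarith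
  then have "real M \<le> 2 * 2 ^ n" using M0 by (simp add: field_simps)
  also have "\<dots> = 2 powr (real n + 1)" by (simp add: powr_add powr_realpow)
  finally have "2 powr (real n * R) \<le> 2 powr (real n + 1)" using Mge by linarith
  then have "real n * R \<le> real n + 1" by simp
  moreover have "real n * (R - 1) > 1" using n(2) R by (simp add: field_simps)
  ultimately show False by (simp add: algebra_simps)
qed

lemma achievable_0: "achievable K ps pd 0"
  unfolding achievable_def
proof (intro allI impI exI[of _ 0] allI impI)
  fix \<epsilon> :: real and n :: nat assume "\<epsilon> > 0"
  have "num_msgs n 0 = 1" unfolding num_msgs_def by simp
  then show "\<exists>enc f dec. avg_error K ps pd n (num_msgs n 0) enc f dec \<le> \<epsilon>"
    using \<open>\<epsilon> > 0\<close> by (intro exI[of _ "\<lambda>_ _. False"] exI[of _ "\<lambda>_ _ _. False"] exI[of _ "\<lambda>_. 0"])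
      (simp add: avg_error_def)
qed

lemma capacity_le1:
  assumes "0 \<le> ps" "ps \<le> 1" "0 \<le> pd" "pd \<le> 1"
  shows "capacity K (\<lambda>_. ps) (\<lambda>_. pd) \<le> 1"
  unfolding capacity_def
  by (rule cSup_least) (use achievable_0 achievable_le1[OF assms] in auto)



definition Tst :: "real \<Rightarrow> nat \<Rightarrow> nat \<Rightarrow> (nat \<Rightarrow> bool) \<Rightarrow> (nat \<Rightarrow> bool) \<Rightarrow> (nat\<times>nat) set \<Rightarrow> (nat\<times>nat) set \<Rightarrow> real" where
  "Tst p k m a b Zs Es = (\<Prod>t<m. rho p k (if a t = b t then card (Nset k Zs Es t) else k - card (Nset k Zs Es t)))"

definition stat :: "real \<Rightarrow> nat \<Rightarrow> nat \<Rightarrow> (nat\<times>nat) set \<Rightarrow> nat \<Rightarrow> (nat \<Rightarrow> nat \<Rightarrow> bool) \<Rightarrow> real" where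
  "stat p k m C w Y = (\<Prod>t<m. rho p k (card {i. i < k \<and> Y i (Suc t) \<noteq> ((w,t) \<in> C)}))"

definition cdec :: "real \<Rightarrow> nat \<Rightarrow> nat \<Rightarrow> real \<Rightarrow> nat \<Rightarrow> (nat\<times>nat) set \<Rightarrow> (nat \<Rightarrow> nat \<Rightarrow> bool) \<Rightarrow> nat" where
  "cdec p k m \<theta> M C Y = (LEAST w. w < M \<and> stat p k m C w Y > \<theta>)"

lemma recv_fwd:
  assumes "i < K" "Suc t < n"
  shows "received K n enc fwd_relays w Zs Es i (Suc t) = ((enc w t \<noteq> ((i,t) \<in> Zs)) \<noteq> ((i,Suc t) \<in> Es))"
  using assms unfolding received_def fwd_relays_def relay_in_def by simp

lemma stat_eq:
  assumes "k \<le> K" "m < n"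
  shows "stat p k m C w' (received K n (\<lambda>w t. (w,t) \<in> C) fwd_relays w Zs Es)
       = Tst p k m (\<lambda>t. (w',t) \<in> C) (\<lambda>t. (w,t) \<in> C) Zs Es"
  unfolding stat_def Tst_def
proof (intro prod.cong[OF refl])
  fix t assume t: "t \<in> {..<m}"
  define N where "N = Nset k Zs Es t"
  have "{i. i < k \<and> received K n (\<lambda>w t. (w,t) \<in> C) fwd_relays w Zs Es i (Suc t) \<noteq> ((w',t) \<in> C)}
      = (if ((w',t) \<in> C) = ((w,t) \<in> C) then N else {..<k} - N)"
    using t assms recv_fwd[of _ K t n "\<lambda>w t. (w,t) \<in> C" w Zs Es] unfolding N_def Nset_def
    by (auto simp: set_eq_iff)
  moreover have "N \<subseteq> {..<k}" unfolding N_def Nset_def by auto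
  ultimately show "rho p k (card {i. i < k \<and> received K n (\<lambda>w t. (w,t) \<in> C) fwd_relays w Zs Es i (Suc t) \<noteq> ((w',t) \<in> C)})
     = rho p k (if ((w',t) \<in> C) = ((w,t) \<in> C) then card (Nset k Zs Es t) else k - card (Nset k Zs Es t))"
    unfolding N_def by (simp add: card_Diff_subset finite_subset)
qed

lemma ind_bound:
  assumes "w < M"
  shows "(if cdec p k m \<theta> M C Y \<noteq> w then 1 else 0 :: real)
     \<le> (if stat p k m C w Y \<le> \<theta> then 1 else 0) + (\<Sum>w'\<in>{..<M} - {w}. if stat p k m C w' Y > \<theta> then 1 else 0)"
proof (cases "stat p k m C w Y > \<theta> \<and> (\<forall>w'\<in>{..<M} - {w}. \<not> stat p k m C w' Y > \<theta>)")
  case True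
  have "cdec p k m \<theta> M C Y = w"
    unfolding cdec_def by (rule Least_equality) (use True assms in auto)
  then show ?thesis by (simp add: sum_nonneg)
next
  case False
  then show ?thesis
  proof (cases "stat p k m C w Y > \<theta>")
    case True
    with False obtain w' where w': "w' \<in> {..<M} - {w}" "stat p k m C w' Y > \<theta>" by auto
    have "1 \<le> (\<Sum>w'\<in>{..<M} - {w}. if stat p k m C w' Y > \<theta> then 1 else 0 :: real)"
    proof -
      have "(\<lambda>w'. if stat p k m C w' Y > \<theta> then 1 else 0 :: real) w' \<le> (\<Sum>w'\<in>{..<M} - {w}. if stat p k m C w' Y > \<theta> then 1 else 0 :: real)"
        by (rule member_le_sum) (use w' in auto)
      then show ?thesis using w'(2) by simp
    qed
    then show ?thesis by (auto intro: order_trans[of _ 1])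
  next
    case False
    then show ?thesis by (simp add: sum_nonneg)
  qed
qed



lemma wt_zero_empty:
  assumes "wt 0 A S \<noteq> 0" "finite A"
  shows "S \<inter> A = {}"
proof (rule ccontr)
  assume "S \<inter> A \<noteq> {}"
  then obtain x where "x \<in> S" "x \<in> A" by auto
  then have "wt 0 A S = 0" unfolding wt_def using assms(2)
    by (intro prod_zero) auto
  with assms(1) show False by simp
qed

lemma p_range:
  fixes ps pd :: real
  assumes "0 \<le> ps" "ps < 1/2" "0 \<le> pd" "pd < 1/2"
  shows "0 \<le> ps*(1-pd)+(1-ps)*pd" "ps*(1-pd)+(1-ps)*pd < 1/2"
proof -
  show "0 \<le> ps*(1-pd)+(1-ps)*pd" using assms by (intro add_nonneg_nonneg mult_nonneg_nonneg) auto
  have "1 - 2*(ps*(1-pd)+(1-ps)*pd) = (1 - 2*ps) * (1 - 2*pd)" by (simp add: algebra_simps)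
  moreover have "0 < (1 - 2*ps) * (1 - 2*pd)" using assms by (intro mult_pos_pos) auto
  ultimately have "0 < 1 - 2*(ps*(1-pd)+(1-ps)*pd)" by simp
  moreover obtain X where X: "ps*(1-pd)+(1-ps)*pd = X" by simp
  ultimately show "ps*(1-pd)+(1-ps)*pd < 1/2" by simp
qed

lemma W_nonzero:
  assumes "0 \<le> ps" "ps < 1/2" "0 \<le> pd" "pd < 1/2" "p = ps*(1-pd)+(1-ps)*pd"
    "k \<le> K" "m < n" "t < m"
    "wt ps (grid K n) Zs * wt pd (grid K n) Es \<noteq> 0"
  shows "Wt p k (card (Nset k Zs Es t)) \<noteq> 0"
proof (cases "p = 0")
  case False
  have "p \<ge> 0" "p < 1" using p_range[OF assms(1-4)] assms(5) by auto
  then have "0 < p" using False by simp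
  then show ?thesis using Wt_pos[of p k] \<open>p < 1\<close> by (metis less_irrefl)
next
  case True
  have t1: "0 \<le> ps*(1-pd)" "0 \<le> (1-ps)*pd" using assms(1-4) by auto
  then have "ps*(1-pd) = 0" "(1-ps)*pd = 0" using True assms(5) by linarith+
  then have z: "ps = 0" "pd = 0" using assms(2,4) by auto
  have fG: "finite (grid K n)" unfolding grid_def by simp
  have "Zs \<inter> grid K n = {}" "Es \<inter> grid K n = {}"
    using assms(9) z wt_zero_empty[OF _ fG] by auto
  then have "Nset k Zs Es t = {}" unfolding Nset_def grid_def using assms(6-8) by auto
  then show ?thesis unfolding Wt_def using True by simp
qed

lemma termA:
  assumes "0 \<le> ps" "ps < 1/2" "0 \<le> pd" "pd < 1/2" "p = ps*(1-pd)+(1-ps)*pd"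
    "k \<le> K" "m < n" "s > 0"
  shows "(\<Sum>Zs\<in>Pow (grid K n). \<Sum>Es\<in>Pow (grid K n). wt ps (grid K n) Zs * wt pd (grid K n) Es *
            (if Tst p k m b b Zs Es \<le> 2 powr (\<gamma> * m) then 1 else 0)) \<le> psi p k \<gamma> s ^ m"
proof -
  define G where "G = grid K n"
  define \<theta> where "\<theta> = 2 powr (\<gamma> * m)"
  have p01: "0 \<le> p" "p \<le> 1" using p_range[OF assms(1-4)] assms(5) by auto
  have T: "Tst p k m b b Zs Es = (\<Prod>t<m. rho p k (card (Nset k Zs Es t)))" for Zs Es
    unfolding Tst_def by simp
  have pt: "wt ps G Zs * wt pd G Es * (if Tst p k m b b Zs Es \<le> \<theta> then 1 else 0)
      \<le> \<theta> powr s * (wt ps G Zs * wt pd G Es * (\<Prod>t<m. rho p k (card (Nset k Zs Es t)) powr (- s)))" for Zs Es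
  proof (cases "wt ps G Zs * wt pd G Es = 0")
    case True then show ?thesis by (simp only: True mult_zero_left mult_zero_right order_refl)
  next
    case False
    have "0 \<le> wt ps G Zs * wt pd G Es"
      by (intro mult_nonneg_nonneg wt_nonneg) (use assms(1-4) in auto)
    then have wpos: "0 < wt ps G Zs * wt pd G Es" using False by (simp add: order_less_le)
    have rpos: "0 < rho p k (card (Nset k Zs Es t))" if "t < m" for t
      using rho_pos[OF p01] W_nonzero[OF assms(1-7) that] False unfolding G_def by blast
    define Tv where "Tv = (\<Prod>t<m. rho p k (card (Nset k Zs Es t)))"
    have Tpos: "0 < Tv" unfolding Tv_def using rpos by (intro prod_pos) auto
    have pe: "(\<Prod>t<m. rho p k (card (Nset k Zs Es t)) powr (- s)) = Tv powr (- s)"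
      unfolding Tv_def by (simp add: prod_powr_distrib)
    have "(if Tst p k m b b Zs Es \<le> \<theta> then 1 else 0) \<le> \<theta> powr s * Tv powr (- s)"
    proof (cases "Tv \<le> \<theta>")
      case True
      then have th: "0 < \<theta>" "1 \<le> \<theta> / Tv" using Tpos by auto
      have "1 \<le> (\<theta> / Tv) powr s" by (rule ge_one_powr_ge_zero) (use th assms(8) in auto)
      also have "\<dots> = \<theta> powr s * Tv powr (- s)"
        using th Tpos by (subst powr_divide) (auto simp: powr_minus divide_inverse)
      finally show ?thesis by simp
    next
      case False
      then show ?thesis unfolding T Tv_def by simp
    qed
    then have "wt ps G Zs * wt pd G Es * (if Tst p k m b b Zs Es \<le> \<theta> then 1 else 0) \<le> wt ps G Zs * wt pd G Es * (\<theta> powr s * Tv powr (- s))"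
      using wpos by (intro mult_left_mono) auto
    then show ?thesis unfolding pe by (simp only: mult_ac)
  qed
  have "(\<Sum>Zs\<in>Pow G. \<Sum>Es\<in>Pow G. wt ps G Zs * wt pd G Es * (if Tst p k m b b Zs Es \<le> \<theta> then 1 else 0))
      \<le> (\<Sum>Zs\<in>Pow G. \<Sum>Es\<in>Pow G. \<theta> powr s * (wt ps G Zs * wt pd G Es * (\<Prod>t<m. rho p k (card (Nset k Zs Es t)) powr (- s))))"
    by (intro sum_mono pt)
  also have "\<dots> = \<theta> powr s * (\<Sum>Zs\<in>Pow G. \<Sum>Es\<in>Pow G. wt ps G Zs * wt pd G Es * (\<Prod>t<m. rho p k (card (Nset k Zs Es t)) powr (- s)))"
    by (simp add: sum_distrib_left)
  also have "\<dots> = \<theta> powr s * (\<Sum>d\<le>k. of_nat (k choose d) * Wt p k d * rho p k d powr (- s)) ^ m"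
  proof -
    have "(\<Sum>Zs\<in>Pow G. \<Sum>Es\<in>Pow G. wt ps G Zs * wt pd G Es * (\<Prod>t<m. (\<lambda>d. rho p k d powr (- s)) (card (Nset k Zs Es t))))
        = (\<Sum>d\<le>k. of_nat (k choose d) * (ps*(1-pd)+(1-ps)*pd) ^ d * (1 - (ps*(1-pd)+(1-ps)*pd)) ^ (k - d) * (\<lambda>d. rho p k d powr (- s)) d) ^ m"
      unfolding G_def by (rule noise_factor[OF assms(6,7)])
    then show ?thesis unfolding assms(5)[symmetric] Wt_def by (simp add: mult.assoc)
  qed
  also have "\<dots> = psi p k \<gamma> s ^ m"
  proof -
    have "\<theta> powr s = (2 powr (\<gamma> * s)) ^ m"
      unfolding \<theta>_def by (simp add: powr_powr powr_realpow[symmetric] algebra_simps)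
    moreover have "psi p k \<gamma> s = 2 powr (\<gamma> * s) * (\<Sum>d\<le>k. of_nat (k choose d) * Wt p k d * rho p k d powr (- s))"
      unfolding psi_def by (simp add: sum_distrib_left algebra_simps)
    ultimately show ?thesis by (simp add: power_mult_distrib)
  qed
  finally show ?thesis unfolding G_def \<theta>_def .
qed



lemma codebook_avg:
  assumes "w < M" "w' < M" "w \<noteq> w'"
  shows "(\<Sum>C\<in>Pow (grid M m). Tst p k m (\<lambda>t. (w',t) \<in> C) (\<lambda>t. (w,t) \<in> C) Zs Es)
       = 2 ^ (M*m - m) * (\<Prod>t<m. rho p k (card (Nset k Zs Es t)) + rho p k (k - card (Nset k Zs Es t)))"
proof -
  define R where "R = (\<lambda>t. (w',t)) ` {..<m}"
  define d where "d t = card (Nset k Zs Es t)" for t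
  have RG: "R \<subseteq> grid M m" unfolding R_def grid_def using assms by auto
  have fG: "finite (grid M m)" unfolding grid_def by simp
  have GR: "grid M m = (grid M m - R) \<union> R" using RG by auto
  have inj: "inj (\<lambda>t::nat. (w',t))" by (auto simp: inj_on_def)
  have cardR: "card R = m" unfolding R_def using inj by (simp add: card_image inj_on_def)
  have inner: "(\<Sum>C2\<in>Pow R. Tst p k m (\<lambda>t. (w',t) \<in> C1 \<union> C2) (\<lambda>t. (w,t) \<in> C1 \<union> C2) Zs Es)
      = (\<Prod>t<m. rho p k (d t) + rho p k (k - d t))" if C1: "C1 \<subseteq> grid M m - R" for C1
  proof -
    define g where "g t b = rho p k (if b = ((w,t) \<in> C1) then d t else k - d t)" for t b
    have "Tst p k m (\<lambda>t. (w',t) \<in> C1 \<union> C2) (\<lambda>t. (w,t) \<in> C1 \<union> C2) Zs Es = (\<Prod>t<m. g t ((w',t) \<in> C2))"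
      if C2: "C2 \<subseteq> R" for C2
      unfolding Tst_def g_def d_def
    proof (intro prod.cong[OF refl])
      fix t assume t: "t \<in> {..<m}"
      have "((w',t) \<in> C1 \<union> C2) = ((w',t) \<in> C2)" using C1 t unfolding R_def by auto
      moreover have "((w,t) \<in> C1 \<union> C2) = ((w,t) \<in> C1)" using C2 assms(3) unfolding R_def by auto
      ultimately show "rho p k (if ((w',t) \<in> C1 \<union> C2) = ((w,t) \<in> C1 \<union> C2) then card (Nset k Zs Es t) else k - card (Nset k Zs Es t))
          = rho p k (if ((w',t) \<in> C2) = ((w,t) \<in> C1) then card (Nset k Zs Es t) else k - card (Nset k Zs Es t))"
        by simp
    qed
    then have "(\<Sum>C2\<in>Pow R. Tst p k m (\<lambda>t. (w',t) \<in> C1 \<union> C2) (\<lambda>t. (w,t) \<in> C1 \<union> C2) Zs Es)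
        = (\<Sum>C2\<in>Pow R. \<Prod>t<m. g t ((w',t) \<in> C2))" by (intro sum.cong) auto
    also have "\<dots> = (\<Sum>S\<in>Pow {..<m}. \<Prod>t<m. g t ((w',t) \<in> (\<lambda>t. (w',t)) ` S))"
      unfolding R_def by (rule sum_Pow_image[OF inj])
    also have "\<dots> = (\<Sum>S\<in>Pow {..<m}. \<Prod>t\<in>{..<m}. g t (t \<in> S))"
    proof -
      have e: "((w',t) \<in> (\<lambda>t. (w',t)) ` S) = (t \<in> S)" for t S by auto
      show ?thesis by (simp only: e)
    qed
    also have "\<dots> = (\<Prod>t<m. g t True + g t False)" by (rule sum_Pow_bool) simp
    also have "\<dots> = (\<Prod>t<m. rho p k (d t) + rho p k (k - d t))"
      unfolding g_def by (intro prod.cong[OF refl]) auto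
    finally show ?thesis .
  qed
  have "(\<Sum>C\<in>Pow (grid M m). Tst p k m (\<lambda>t. (w',t) \<in> C) (\<lambda>t. (w,t) \<in> C) Zs Es)
      = (\<Sum>C1\<in>Pow (grid M m - R). \<Sum>C2\<in>Pow R. Tst p k m (\<lambda>t. (w',t) \<in> C1 \<union> C2) (\<lambda>t. (w,t) \<in> C1 \<union> C2) Zs Es)"
    by (subst GR, rule sum_Pow_Un) (use fG RG in \<open>auto intro: finite_subset\<close>)
  also have "\<dots> = (\<Sum>C1\<in>Pow (grid M m - R). (\<Prod>t<m. rho p k (d t) + rho p k (k - d t)))"
    by (intro sum.cong[OF refl] inner) auto
  also have "\<dots> = 2 ^ (M*m - m) * (\<Prod>t<m. rho p k (d t) + rho p k (k - d t))"
  proof -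
    have "card (grid M m) = M * m" unfolding grid_def by (simp add: card_cartesian_product)
    then have "card (grid M m - R) = M*m - m" using RG cardR fG by (simp add: card_Diff_subset finite_subset)
    then show ?thesis using fG by (simp add: card_Pow)
  qed
  finally show ?thesis unfolding d_def .
qed

lemma termB:
  assumes "w < M" "w' < M" "w \<noteq> w'" "0 \<le> p" "p \<le> 1" "p = ps*(1-pd)+(1-ps)*pd" "k \<le> K" "m < n"
  shows "(\<Sum>C\<in>Pow (grid M m). \<Sum>Zs\<in>Pow (grid K n). \<Sum>Es\<in>Pow (grid K n).
            wt ps (grid K n) Zs * wt pd (grid K n) Es * Tst p k m (\<lambda>t. (w',t) \<in> C) (\<lambda>t. (w,t) \<in> C) Zs Es)
       = 2 ^ (M*m)"
proof -
  define G where "G = grid K n"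
  have "(\<Sum>C\<in>Pow (grid M m). \<Sum>Zs\<in>Pow G. \<Sum>Es\<in>Pow G. wt ps G Zs * wt pd G Es * Tst p k m (\<lambda>t. (w',t) \<in> C) (\<lambda>t. (w,t) \<in> C) Zs Es)
      = (\<Sum>Zs\<in>Pow G. \<Sum>C\<in>Pow (grid M m). \<Sum>Es\<in>Pow G. wt ps G Zs * wt pd G Es * Tst p k m (\<lambda>t. (w',t) \<in> C) (\<lambda>t. (w,t) \<in> C) Zs Es)"
    by (rule sum.swap)
  also have "\<dots> = (\<Sum>Zs\<in>Pow G. \<Sum>Es\<in>Pow G. \<Sum>C\<in>Pow (grid M m). wt ps G Zs * wt pd G Es * Tst p k m (\<lambda>t. (w',t) \<in> C) (\<lambda>t. (w,t) \<in> C) Zs Es)"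
    by (intro sum.cong[OF refl] sum.swap)
  also have "\<dots> = (\<Sum>Zs\<in>Pow G. \<Sum>Es\<in>Pow G. 2 ^ (M*m - m) * (wt ps G Zs * wt pd G Es *
        (\<Prod>t<m. (\<lambda>d. rho p k d + rho p k (k - d)) (card (Nset k Zs Es t)))))"
    by (intro sum.cong[OF refl]) (simp add: sum_distrib_left[symmetric] codebook_avg[OF assms(1-3)] mult_ac)
  also have "\<dots> = 2 ^ (M*m - m) * (\<Sum>d\<le>k. of_nat (k choose d) * (ps*(1-pd)+(1-ps)*pd) ^ d * (1 - (ps*(1-pd)+(1-ps)*pd)) ^ (k - d) * (\<lambda>d. rho p k d + rho p k (k - d)) d) ^ m"
    unfolding G_def sum_distrib_left[symmetric] by (subst noise_factor[OF assms(7,8)]) (rule refl)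
  also have "\<dots> = 2 ^ (M*m - m) * 2 ^ m"
    using sum_W_rho[OF assms(4,5), of k] unfolding assms(6)[symmetric] Wt_def by (simp add: mult.assoc)
  also have "\<dots> = 2 ^ (M*m)"
  proof -
    have "M*m - m + m = M*m" using assms(1) by (cases M) auto
    then show ?thesis by (metis power_add)
  qed
  finally show ?thesis unfolding G_def .
qed



lemma rho_nonneg: "0 \<le> p \<Longrightarrow> p \<le> 1 \<Longrightarrow> 0 \<le> rho p k d"
  unfolding rho_def Ad_def using Wt_nonneg[of p k] by simp

lemma Tst_nonneg: "0 \<le> p \<Longrightarrow> p \<le> 1 \<Longrightarrow> 0 \<le> Tst p k m a b Zs Es"
  unfolding Tst_def by (intro prod_nonneg) (simp add: rho_nonneg)

lemma exists_le_avg: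
  fixes f :: "'a \<Rightarrow> real"
  assumes "finite A" "A \<noteq> {}" "(\<Sum>x\<in>A. f x) \<le> real (card A) * b"
  shows "\<exists>x\<in>A. f x \<le> b"
proof (rule ccontr)
  assume "\<not> (\<exists>x\<in>A. f x \<le> b)"
  then have "\<And>x. x \<in> A \<Longrightarrow> b < f x" by auto
  then have "(\<Sum>x\<in>A. b) < (\<Sum>x\<in>A. f x)" using assms(1,2) by (intro sum_strict_mono) auto
  then show False using assms(3) by simp
qed

lemma per_w:
  assumes "0 \<le> ps" "ps < 1/2" "0 \<le> pd" "pd < 1/2" "p = ps*(1-pd)+(1-ps)*pd"
    "k \<le> K" "m < n" "s > 0" "w < M" "\<theta> = 2 powr (\<gamma> * m)"
  shows "(\<Sum>Zs\<in>Pow (grid K n). \<Sum>Es\<in>Pow (grid K n). wt ps (grid K n) Zs * wt pd (grid K n) Es *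
           (if cdec p k m \<theta> M C (received K n (\<lambda>w t. (w,t) \<in> C) fwd_relays w Zs Es) \<noteq> w then 1 else 0))
     \<le> psi p k \<gamma> s ^ m + (\<Sum>w'\<in>{..<M} - {w}. \<Sum>Zs\<in>Pow (grid K n). \<Sum>Es\<in>Pow (grid K n).
           wt ps (grid K n) Zs * wt pd (grid K n) Es * Tst p k m (\<lambda>t. (w',t) \<in> C) (\<lambda>t. (w,t) \<in> C) Zs Es / \<theta>)"
proof -
  define G where "G = grid K n"
  define Y where "Y Zs Es = received K n (\<lambda>w t. (w,t) \<in> C) fwd_relays w Zs Es" for Zs Es
  define c where "c w' = (\<lambda>t. (w',t) \<in> C)" for w'
  have p01: "0 \<le> p" "p \<le> 1" using p_range[OF assms(1-4)] assms(5) by auto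
  have th: "\<theta> > 0" using assms(10) by simp
  have wn: "0 \<le> wt ps G Zs * wt pd G Es" for Zs Es
    by (intro mult_nonneg_nonneg wt_nonneg) (use assms(1-4) in auto)
  have st: "stat p k m C w' (Y Zs Es) = Tst p k m (c w') (c w) Zs Es" for w' Zs Es
    unfolding Y_def c_def by (rule stat_eq[OF assms(6,7)])
  have "(\<Sum>Zs\<in>Pow G. \<Sum>Es\<in>Pow G. wt ps G Zs * wt pd G Es * (if cdec p k m \<theta> M C (Y Zs Es) \<noteq> w then 1 else 0))
     \<le> (\<Sum>Zs\<in>Pow G. \<Sum>Es\<in>Pow G. wt ps G Zs * wt pd G Es *
          ((if Tst p k m (c w) (c w) Zs Es \<le> \<theta> then 1 else 0) + (\<Sum>w'\<in>{..<M} - {w}. if Tst p k m (c w') (c w) Zs Es > \<theta> then 1 else 0)))"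
  proof (intro sum_mono, rule mult_left_mono[OF _ wn])
    fix Zs Es
    show "(if cdec p k m \<theta> M C (Y Zs Es) \<noteq> w then 1 else 0 :: real)
      \<le> (if Tst p k m (c w) (c w) Zs Es \<le> \<theta> then 1 else 0) + (\<Sum>w'\<in>{..<M} - {w}. if Tst p k m (c w') (c w) Zs Es > \<theta> then 1 else 0)"
      using ind_bound[OF assms(9), of p k m \<theta> C "Y Zs Es"] unfolding st .
  qed
  also have "\<dots> = (\<Sum>Zs\<in>Pow G. \<Sum>Es\<in>Pow G. wt ps G Zs * wt pd G Es * (if Tst p k m (c w) (c w) Zs Es \<le> \<theta> then 1 else 0))
      + (\<Sum>Zs\<in>Pow G. \<Sum>Es\<in>Pow G. \<Sum>w'\<in>{..<M} - {w}. wt ps G Zs * wt pd G Es * (if Tst p k m (c w') (c w) Zs Es > \<theta> then 1 else 0))"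
    by (simp only: distrib_left sum_distrib_left sum.distrib)
  also have "(\<Sum>Zs\<in>Pow G. \<Sum>Es\<in>Pow G. wt ps G Zs * wt pd G Es * (if Tst p k m (c w) (c w) Zs Es \<le> \<theta> then 1 else 0))
      \<le> psi p k \<gamma> s ^ m"
    unfolding G_def assms(10) by (rule termA[OF assms(1-8)])
  also have "(\<Sum>Zs\<in>Pow G. \<Sum>Es\<in>Pow G. \<Sum>w'\<in>{..<M} - {w}. wt ps G Zs * wt pd G Es * (if Tst p k m (c w') (c w) Zs Es > \<theta> then 1 else 0))
      \<le> (\<Sum>Zs\<in>Pow G. \<Sum>Es\<in>Pow G. \<Sum>w'\<in>{..<M} - {w}. wt ps G Zs * wt pd G Es * Tst p k m (c w') (c w) Zs Es / \<theta>)"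
  proof (intro sum_mono)
    fix Zs Es w'
    have h: "(if Tst p k m (c w') (c w) Zs Es > \<theta> then 1 else 0) \<le> Tst p k m (c w') (c w) Zs Es / \<theta>"
      using th Tst_nonneg[OF p01] by auto
    then show "wt ps G Zs * wt pd G Es * (if Tst p k m (c w') (c w) Zs Es > \<theta> then 1 else 0)
        \<le> wt ps G Zs * wt pd G Es * Tst p k m (c w') (c w) Zs Es / \<theta>"
      using mult_left_mono[OF h wn] by (simp only: times_divide_eq_right)
  qed
  also have "(\<Sum>Zs\<in>Pow G. \<Sum>Es\<in>Pow G. \<Sum>w'\<in>{..<M} - {w}. wt ps G Zs * wt pd G Es * Tst p k m (c w') (c w) Zs Es / \<theta>)
      = (\<Sum>w'\<in>{..<M} - {w}. \<Sum>Zs\<in>Pow G. \<Sum>Es\<in>Pow G. wt ps G Zs * wt pd G Es * Tst p k m (c w') (c w) Zs Es / \<theta>)"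
    by (subst sum.swap, rule sum.cong[OF refl], rule sum.swap)
  finally show ?thesis unfolding G_def Y_def c_def by (simp only: add_right_mono add_left_mono)
qed



lemma code_exists:
  assumes "0 \<le> ps" "ps < 1/2" "0 \<le> pd" "pd < 1/2" "p = ps*(1-pd)+(1-ps)*pd"
    "k \<le> K" "m < n" "s > 0" "M \<ge> 1" "\<theta> = 2 powr (\<gamma> * m)"
  shows "\<exists>C. avg_error K (\<lambda>_. ps) (\<lambda>_. pd) n M (\<lambda>w t. (w,t) \<in> C) fwd_relays (cdec p k m \<theta> M C)
            \<le> psi p k \<gamma> s ^ m + (real M - 1) / \<theta>"
proof -
  define G where "G = grid K n"
  define B where "B w C = (\<Sum>w'\<in>{..<M} - {w}. \<Sum>Zs\<in>Pow G. \<Sum>Es\<in>Pow G.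
           wt ps G Zs * wt pd G Es * Tst p k m (\<lambda>t. (w',t) \<in> C) (\<lambda>t. (w,t) \<in> C) Zs Es / \<theta>)" for w C
  define E where "E C = avg_error K (\<lambda>_. ps) (\<lambda>_. pd) n M (\<lambda>w t. (w,t) \<in> C) fwd_relays (cdec p k m \<theta> M C)" for C
  define P where "P = psi p k \<gamma> s ^ m"
  have p01: "0 \<le> p" "p \<le> 1" using p_range[OF assms(1-4)] assms(5) by auto
  have M0: "real M > 0" using assms(9) by simp
  have th: "\<theta> > 0" using assms(10) by simp
  have EB: "E C \<le> P + (1 / real M) * (\<Sum>w<M. B w C)" for C
  proof -
    have "E C = (1 / real M) * (\<Sum>w<M. \<Sum>Zs\<in>Pow G. \<Sum>Es\<in>Pow G. wt ps G Zs * wt pd G Es *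
           (if cdec p k m \<theta> M C (received K n (\<lambda>w t. (w,t) \<in> C) fwd_relays w Zs Es) \<noteq> w then 1 else 0))"
      unfolding E_def avg_error_def noise_wt G_def ..
    also have "\<dots> \<le> (1 / real M) * (\<Sum>w<M. P + B w C)"
      unfolding P_def B_def G_def
      by (intro mult_left_mono sum_mono per_w[OF assms(1-8) _ assms(10)]) auto
    also have "\<dots> = P + (1 / real M) * (\<Sum>w<M. B w C)"
      using M0 by (simp add: sum.distrib field_simps)
    finally show ?thesis .
  qed
  have SB: "(\<Sum>C\<in>Pow (grid M m). \<Sum>w<M. B w C) = real M * ((real M - 1) * 2 ^ (M*m) / \<theta>)"
  proof -
    have "(\<Sum>C\<in>Pow (grid M m). \<Sum>w<M. B w C) = (\<Sum>w<M. \<Sum>C\<in>Pow (grid M m). B w C)"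
      by (rule sum.swap)
    also have "\<dots> = (\<Sum>w<M. (real M - 1) * 2 ^ (M*m) / \<theta>)"
    proof (intro sum.cong[OF refl])
      fix w assume w: "w \<in> {..<M}"
      have "(\<Sum>C\<in>Pow (grid M m). B w C) = (\<Sum>w'\<in>{..<M} - {w}. \<Sum>C\<in>Pow (grid M m). \<Sum>Zs\<in>Pow G. \<Sum>Es\<in>Pow G.
           wt ps G Zs * wt pd G Es * Tst p k m (\<lambda>t. (w',t) \<in> C) (\<lambda>t. (w,t) \<in> C) Zs Es / \<theta>)"
        unfolding B_def by (rule sum.swap)
      also have "\<dots> = (\<Sum>w'\<in>{..<M} - {w}. (\<Sum>C\<in>Pow (grid M m). \<Sum>Zs\<in>Pow G. \<Sum>Es\<in>Pow G.
           wt ps G Zs * wt pd G Es * Tst p k m (\<lambda>t. (w',t) \<in> C) (\<lambda>t. (w,t) \<in> C) Zs Es) / \<theta>)"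
        by (simp only: sum_divide_distrib)
      also have "\<dots> = (\<Sum>w'\<in>{..<M} - {w}. 2 ^ (M*m) / \<theta>)"
        unfolding G_def using w by (intro sum.cong[OF refl]) (subst termB[OF _ _ _ p01 assms(5,6,7)], auto)
      also have "\<dots> = (real M - 1) * 2 ^ (M*m) / \<theta>"
        using w by (simp add: of_nat_diff)
      finally show "(\<Sum>C\<in>Pow (grid M m). B w C) = (real M - 1) * 2 ^ (M*m) / \<theta>" .
    qed
    also have "\<dots> = real M * ((real M - 1) * 2 ^ (M*m) / \<theta>)" by simp
    finally show ?thesis .
  qed
  have cardP: "card (Pow (grid M m)) = 2 ^ (M*m)"
    by (simp add: card_Pow grid_def card_cartesian_product)
  have "(\<Sum>C\<in>Pow (grid M m). E C) \<le> (\<Sum>C\<in>Pow (grid M m). P + (1 / real M) * (\<Sum>w<M. B w C))"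
    by (intro sum_mono EB)
  also have "\<dots> = real (card (Pow (grid M m))) * P + (1 / real M) * (\<Sum>C\<in>Pow (grid M m). \<Sum>w<M. B w C)"
    by (simp add: sum.distrib sum_distrib_left)
  also have "\<dots> = real (card (Pow (grid M m))) * (P + (real M - 1) / \<theta>)"
    unfolding SB cardP using M0 th by (simp add: field_simps)
  finally obtain C where "E C \<le> P + (real M - 1) / \<theta>"
    using exists_le_avg[of "Pow (grid M m)" E] by (auto simp: grid_def)
  then show ?thesis unfolding E_def P_def by blast
qed



lemma psi_nonneg: "0 \<le> p \<Longrightarrow> p \<le> 1 \<Longrightarrow> 0 \<le> psi p k \<gamma> s"
  unfolding psi_def by (intro sum_nonneg mult_nonneg_nonneg Wt_nonneg) auto

lemma num_msgs_bounds: "real (num_msgs n R) \<ge> 2 powr (real n * R)" "real (num_msgs n R) - 1 \<le> 2 powr (real n * R)"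
  "num_msgs n R \<ge> 1"
proof -
  define x where "x = 2 powr (real n * R)"
  have x0: "x > 0" unfolding x_def by simp
  have e: "real (num_msgs n R) = real_of_int \<lceil>x\<rceil>" unfolding num_msgs_def x_def[symmetric]
    using x0 by simp
  show "real (num_msgs n R) \<ge> 2 powr (real n * R)" using e unfolding x_def by simp
  show "real (num_msgs n R) - 1 \<le> 2 powr (real n * R)" using e ceiling_correct[of x] unfolding x_def by linarith
  have "real (num_msgs n R) > 0" using e x0 by (metis ceiling_le_zero not_le of_int_pos)
  then show "num_msgs n R \<ge> 1" by simp
qed

lemma fwd_ach:
  assumes "0 \<le> ps" "ps < 1/2" "0 \<le> pd" "pd < 1/2" "p = ps*(1-pd)+(1-ps)*pd"
    "k \<le> K" "R' < Info p k"
  shows "fwd_achievable K (\<lambda>_. ps) (\<lambda>_. pd) R'"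
  unfolding fwd_achievable_def
proof (intro allI impI)
  fix \<epsilon> :: real assume eps: "\<epsilon> > 0"
  have p01: "0 \<le> p" "p \<le> 1" using p_range[OF assms(1-4)] assms(5) by auto
  define \<gamma> where "\<gamma> = (R' + Info p k) / 2"
  have g: "R' < \<gamma>" "\<gamma> < Info p k" using assms(7) unfolding \<gamma>_def by auto
  obtain s where s: "s > 0" "psi p k \<gamma> s < 1" using psi_lt1[OF p01 g(2)] by blast
  define \<Psi> where "\<Psi> = psi p k \<gamma> s"
  have Psi: "0 \<le> \<Psi>" "\<Psi> < 1" using psi_nonneg[OF p01] s unfolding \<Psi>_def by auto
  define r where "r = 2 powr (R' - \<gamma>)"
  have r: "0 \<le> r" "r < 1" unfolding r_def using g by (auto intro: powr_less_one)
  have "(\<lambda>n. \<Psi> ^ n) \<longlonglongrightarrow> 0" by (rule LIMSEQ_power_zero) (use Psi in auto)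
  then have "eventually (\<lambda>n. \<Psi> ^ n < \<epsilon> / 2) sequentially" by (rule order_tendstoD) (use eps in auto)
  then obtain N1 where N1: "\<And>n. n \<ge> N1 \<Longrightarrow> \<Psi> ^ n < \<epsilon> / 2" by (auto simp: eventually_sequentially)
  have "(\<lambda>n. r ^ n) \<longlonglongrightarrow> 0" by (rule LIMSEQ_power_zero) (use r in auto)
  then have "eventually (\<lambda>n. r ^ n < \<epsilon> / 2 / 2 powr \<gamma>) sequentially" by (rule order_tendstoD) (use eps in auto)
  then obtain N2 where N2: "\<And>n. n \<ge> N2 \<Longrightarrow> r ^ n < \<epsilon> / 2 / 2 powr \<gamma>" by (auto simp: eventually_sequentially)
  show "\<exists>N. \<forall>n\<ge>N. \<exists>enc dec. avg_error K (\<lambda>_. ps) (\<lambda>_. pd) n (num_msgs n R') enc fwd_relays dec \<le> \<epsilon>"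
  proof (intro exI[of _ "Suc (N1 + N2)"] allI impI)
    fix n assume n: "Suc (N1 + N2) \<le> n"
    define m where "m = n - 1"
    define M where "M = num_msgs n R'"
    define \<theta> where "\<theta> = 2 powr (\<gamma> * m)"
    have mn: "m < n" "real m = real n - 1" using n unfolding m_def by auto
    have M1: "M \<ge> 1" unfolding M_def by (rule num_msgs_bounds)
    obtain C where C: "avg_error K (\<lambda>_. ps) (\<lambda>_. pd) n M (\<lambda>w t. (w,t) \<in> C) fwd_relays (cdec p k m \<theta> M C)
            \<le> \<Psi> ^ m + (real M - 1) / \<theta>"
      using code_exists[OF assms(1-6) mn(1) s(1) M1 \<theta>_def] unfolding \<Psi>_def by blast
    have A: "\<Psi> ^ m < \<epsilon> / 2" using N1 n unfolding m_def by auto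
    have "(real M - 1) / \<theta> \<le> 2 powr (real n * R') / \<theta>"
      unfolding \<theta>_def M_def by (rule divide_right_mono) (use num_msgs_bounds in auto)
    also have "\<dots> = 2 powr \<gamma> * r ^ n"
    proof -
      have e: "\<gamma> * real m = \<gamma> * real n - \<gamma>"
        unfolding mn(2) by (simp add: algebra_simps)
      show ?thesis
        unfolding \<theta>_def r_def
        by (simp add: powr_diff[symmetric] powr_add[symmetric] powr_realpow[symmetric] powr_powr e algebra_simps)
    qed
    also have "\<dots> < 2 powr \<gamma> * (\<epsilon> / 2 / 2 powr \<gamma>)"
      using N2[of n] n by (intro mult_strict_left_mono) auto
    also have "\<dots> = \<epsilon> / 2" by simp
    finally have B: "(real M - 1) / \<theta> < \<epsilon> / 2" .
    show "\<exists>enc dec. avg_error K (\<lambda>_. ps) (\<lambda>_. pd) n (num_msgs n R') enc fwd_relays dec \<le> \<epsilon>"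
    proof (intro exI)
      show "avg_error K (\<lambda>_. ps) (\<lambda>_. pd) n (num_msgs n R') (\<lambda>w t. (w,t) \<in> C) fwd_relays (cdec p k m \<theta> M C) \<le> \<epsilon>"
        using C A B unfolding M_def by linarith
    qed
  qed
qed



theorem corollary5:
  fixes ps pd \<zeta> :: real and K :: nat
  assumes "0 \<le> ps" and "ps < 1/2" and "0 \<le> pd" and "pd < 1/2" and "\<zeta> > 0"
    and "K > K_thr (ps * (1 - pd) + (1 - ps) * pd) \<zeta>"
  shows "\<exists>R. R \<ge> capacity K (\<lambda>_. ps) (\<lambda>_. pd) - \<zeta> \<and>
              (\<forall>R'<R. fwd_achievable K (\<lambda>_. ps) (\<lambda>_. pd) R')"
proof -
  define p where "p = ps * (1 - pd) + (1 - ps) * pd"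
  have pr: "0 \<le> p" "p < 1/2" using p_range[OF assms(1-4)] unfolding p_def by auto
  define k where "k = K_thr p \<zeta>"
  have "0 < k \<and> fwd_info p k \<ge> 1 - \<zeta>"
    unfolding k_def K_thr_def using exists_k[OF pr assms(5)] by (rule LeastI_ex)
  then have k: "1 \<le> k" "fwd_info p k \<ge> 1 - \<zeta>" by auto
  have kK: "k \<le> K" using assms(6) unfolding k_def p_def by simp
  have I: "Info p k = fwd_info p k" by (rule Info_eq) (use pr k in auto)
  have cap: "capacity K (\<lambda>_. ps) (\<lambda>_. pd) \<le> 1" by (rule capacity_le1) (use assms in auto)
  show ?thesis
  proof (intro exI[of _ "1 - \<zeta>"] conjI allI impI)
    show "capacity K (\<lambda>_. ps) (\<lambda>_. pd) - \<zeta> \<le> 1 - \<zeta>" using cap by simp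
  next
    fix R' :: real assume "R' < 1 - \<zeta>"
    then have "R' < Info p k" using I k by simp
    then show "fwd_achievable K (\<lambda>_. ps) (\<lambda>_. pd) R'"
      by (rule fwd_ach[OF assms(1-4) p_def kK])
  qed
qed


end
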